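(* Let $(\mathfrak A,\alpha,\omega)$ be a weakly mixing $C^*$-dynamical system with GNS covariant representation $(\mathcal H,\pi,U,\Omega)$ such that the support of $\omega$ in $\mathfrak A^{**}$ is central, and let $0<m_1<m_2$ be natural numbers. Then for every $A\in M\cup M'$, where $M=\pi(\mathfrak A)''$, $$\mathop{\mathrm{s\text{-}lim}}_{N\to\infty}\frac1N\sum_{n=0}^{N-1}U^{nm_1}AU^{nm_2}=\langle A\Omega,\Omega\rangle\,\langle\,\cdot\,,\Omega\rangle\,\Omega,$$ i.e. the limit in the strong operator topology is the operator $\xi\mapsto\langle A\Omega,\Omega\rangle\langle\xi,\Omega\rangle\Omega$.
   Context: A $C^*$-dynamical system $(\mathfrak A,\alpha,\omega)$: $C^*$-algebra $\mathfrak A$, automorphism $\alpha$, $\alpha$-invariant state $\omega$. It is weakly mixing if $\lim_N\frac1N\sum_{n=0}^{N-1}|\omega(A\alpha^n(B))-\omega(A)\omega(B)|=0$ for all $A,B\in\mathfrak A$; equivalently, the $U$-invariant vectors are $\mathbb C\Omega$ and $1$ is the only eigenvalue of $U$. $(\mathcal H,\pi,\Omega)$ is the GNS triple of $\omega$ and $U$ the unitary with $U\pi(A)\Omega=\pi(\alpha(A))\Omega$. $M'$ is the commutant of $M$; central support is equivalent to $\Omega$ being separating for $M$. *)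

theory Defs
  imports "HOL-Analysis.Analysis"
begin

class complex_vector = real_vector +
  fixes scaleC :: "complex \<Rightarrow> 'a \<Rightarrow> 'a" (infixr \<open>*\<^sub>C\<close> 75)
  assumes scaleC_add_right: "a *\<^sub>C (x + y) = a *\<^sub>C x + a *\<^sub>C y"
    and scaleC_add_left: "(a + b) *\<^sub>C x = a *\<^sub>C x + b *\<^sub>C x"
    and scaleC_scaleC: "a *\<^sub>C (b *\<^sub>C x) = (a * b) *\<^sub>C x"
    and scaleC_one: "1 *\<^sub>C x = x"
    and scaleR_scaleC: "scaleR r x = complex_of_real r *\<^sub>C x"

class complex_normed_vector = complex_vector + real_normed_vector +
  assumes norm_scaleC: "norm (a *\<^sub>C x) = cmod a * norm x"

class complex_inner = complex_normed_vector +
  fixes cinner :: "'a \<Rightarrow> 'a \<Rightarrow> complex"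
  assumes cinner_add_left: "cinner (x + y) z = cinner x z + cinner y z"
    and cinner_scaleC_left: "cinner (c *\<^sub>C x) y = c * cinner x y"
    and cinner_commute: "cinner x y = cnj (cinner y x)"
    and cinner_self_norm: "cinner x x = complex_of_real ((norm x)\<^sup>2)"

class chilbert_space = complex_inner + complete_space

class cstar_algebra = real_normed_algebra + complex_normed_vector + banach +
  fixes cstar :: "'a \<Rightarrow> 'a"
  assumes mult_scaleC_left: "(c *\<^sub>C x) * y = c *\<^sub>C (x * y)"
    and mult_scaleC_right: "x * (c *\<^sub>C y) = c *\<^sub>C (x * y)"
    and cstar_cstar: "cstar (cstar x) = x"
    and cstar_add: "cstar (x + y) = cstar x + cstar y"
    and cstar_scaleC: "cstar (c *\<^sub>C x) = cnj c *\<^sub>C cstar x"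
    and cstar_mult: "cstar (x * y) = cstar y * cstar x"
    and cstar_identity: "norm (cstar x * x) = (norm x)\<^sup>2"

definition clinear :: "('a::complex_vector \<Rightarrow> 'b::complex_vector) \<Rightarrow> bool" where
  "clinear f \<longleftrightarrow> (\<forall>x y. f (x + y) = f x + f y) \<and> (\<forall>c x. f (c *\<^sub>C x) = c *\<^sub>C f x)"

definition bounded_clinear :: "('a::complex_normed_vector \<Rightarrow> 'b::complex_normed_vector) \<Rightarrow> bool" where
  "bounded_clinear f \<longleftrightarrow> clinear f \<and> (\<exists>K. \<forall>x. norm (f x) \<le> norm x * K)"

definition commutant :: "('h::complex_normed_vector \<Rightarrow> 'h) set \<Rightarrow> ('h \<Rightarrow> 'h) set" where
  "commutant S = {T. bounded_clinear T \<and> (\<forall>X\<in>S. T \<circ> X = X \<circ> T)}"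

definition separating_vector :: "'h::complex_normed_vector \<Rightarrow> ('h \<Rightarrow> 'h) set \<Rightarrow> bool" where
  "separating_vector \<Omega> S \<longleftrightarrow> (\<forall>T\<in>S. T \<Omega> = 0 \<longrightarrow> T = (\<lambda>_. 0))"

definition is_state :: "('a::cstar_algebra \<Rightarrow> complex) \<Rightarrow> bool" where
  "is_state \<omega> \<longleftrightarrow>
     (\<forall>x y. \<omega> (x + y) = \<omega> x + \<omega> y) \<and> (\<forall>c x. \<omega> (c *\<^sub>C x) = c * \<omega> x) \<and>
     (\<forall>x. \<exists>r\<ge>0. \<omega> (cstar x * x) = complex_of_real r) \<and>
     (\<exists>K. \<forall>x. cmod (\<omega> x) \<le> K * norm x) \<and>
     (SUP x\<in>{x. norm x \<le> 1}. cmod (\<omega> x)) = 1"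

definition star_automorphism :: "('a::cstar_algebra \<Rightarrow> 'a) \<Rightarrow> bool" where
  "star_automorphism \<alpha> \<longleftrightarrow> bij \<alpha> \<and>
     (\<forall>x y. \<alpha> (x + y) = \<alpha> x + \<alpha> y) \<and> (\<forall>c x. \<alpha> (c *\<^sub>C x) = c *\<^sub>C \<alpha> x) \<and>
     (\<forall>x y. \<alpha> (x * y) = \<alpha> x * \<alpha> y) \<and> (\<forall>x. \<alpha> (cstar x) = cstar (\<alpha> x))"

definition cstar_dynamical_system :: "('a::cstar_algebra \<Rightarrow> 'a) \<Rightarrow> ('a \<Rightarrow> complex) \<Rightarrow> bool" where
  "cstar_dynamical_system \<alpha> \<omega> \<longleftrightarrow> star_automorphism \<alpha> \<and> is_state \<omega> \<and> (\<forall>x. \<omega> (\<alpha> x) = \<omega> x)"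

definition weakly_mixing :: "('a::cstar_algebra \<Rightarrow> 'a) \<Rightarrow> ('a \<Rightarrow> complex) \<Rightarrow> bool" where
  "weakly_mixing \<alpha> \<omega> \<longleftrightarrow> (\<forall>A B.
     (\<lambda>N. (\<Sum>n<N. cmod (\<omega> (A * (\<alpha> ^^ n) B) - \<omega> A * \<omega> B)) / real N) \<longlonglongrightarrow> 0)"

definition star_rep :: "('a::cstar_algebra \<Rightarrow> 'h::chilbert_space \<Rightarrow> 'h) \<Rightarrow> bool" where
  "star_rep \<pi> \<longleftrightarrow> (\<forall>A. bounded_clinear (\<pi> A)) \<and>
     (\<forall>A B. \<pi> (A + B) = (\<lambda>x. \<pi> A x + \<pi> B x)) \<and>
     (\<forall>c A. \<pi> (c *\<^sub>C A) = (\<lambda>x. c *\<^sub>C \<pi> A x)) \<and>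
     (\<forall>A B. \<pi> (A * B) = \<pi> A \<circ> \<pi> B) \<and>
     (\<forall>A x y. cinner (\<pi> A x) y = cinner x (\<pi> (cstar A) y))"

definition gns_triple :: "('a::cstar_algebra \<Rightarrow> complex) \<Rightarrow> ('a \<Rightarrow> 'h::chilbert_space \<Rightarrow> 'h) \<Rightarrow> 'h \<Rightarrow> bool" where
  "gns_triple \<omega> \<pi> \<Omega> \<longleftrightarrow> star_rep \<pi> \<and> closure (range (\<lambda>A. \<pi> A \<Omega>)) = UNIV \<and>
     (\<forall>A. \<omega> A = cinner (\<pi> A \<Omega>) \<Omega>)"

definition gns_covariant ::
  "('a::cstar_algebra \<Rightarrow> 'a) \<Rightarrow> ('a \<Rightarrow> complex) \<Rightarrow> ('a \<Rightarrow> 'h::chilbert_space \<Rightarrow> 'h) \<Rightarrow> ('h \<Rightarrow> 'h) \<Rightarrow> 'h \<Rightarrow> bool" where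
  "gns_covariant \<alpha> \<omega> \<pi> U \<Omega> \<longleftrightarrow> gns_triple \<omega> \<pi> \<Omega> \<and>
     bounded_clinear U \<and> surj U \<and> (\<forall>x y. cinner (U x) (U y) = cinner x y) \<and>
     (\<forall>A. U (\<pi> A \<Omega>) = \<pi> (\<alpha> A) \<Omega>)"

end

theory Submission
  imports Defs
begin


section \<open>Basic complex vector / inner product facts\<close>

lemma scaleC_of_real: "complex_of_real r *\<^sub>C (x::'a::complex_vector) = r *\<^sub>R x"
  by (simp add: scaleR_scaleC)

lemma scaleC_zero_left [simp]: "(0::complex) *\<^sub>C (x::'a::complex_vector) = 0"
  by (metis scaleC_of_real of_real_0 scaleR_zero_left)

lemma scaleC_zero_right [simp]: "c *\<^sub>C (0::'a::complex_vector) = 0"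
proof -
  have "c *\<^sub>C (0::'a) = c *\<^sub>C 0 + c *\<^sub>C 0" by (metis scaleC_add_right add_0)
  then show ?thesis by simp
qed

lemma scaleC_minus_left: "(- c) *\<^sub>C (x::'a::complex_vector) = - (c *\<^sub>C x)"
proof -
  have "(- c) *\<^sub>C x + c *\<^sub>C x = 0" by (metis scaleC_add_left add.left_inverse scaleC_zero_left)
  then show ?thesis by (simp add: eq_neg_iff_add_eq_0)
qed

lemma scaleC_minus_right: "c *\<^sub>C (- x::'a::complex_vector) = - (c *\<^sub>C x)"
proof -
  have "c *\<^sub>C (- x) + c *\<^sub>C x = 0" by (metis scaleC_add_right add.left_inverse scaleC_zero_right)
  then show ?thesis by (simp add: eq_neg_iff_add_eq_0)
qed

lemma scaleC_diff_right: "c *\<^sub>C (x - y::'a::complex_vector) = c *\<^sub>C x - c *\<^sub>C y"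
  by (metis diff_conv_add_uminus scaleC_add_right scaleC_minus_right)

lemma scaleC_diff_left: "(a - b) *\<^sub>C (x::'a::complex_vector) = a *\<^sub>C x - b *\<^sub>C x"
  by (metis diff_conv_add_uminus scaleC_add_left scaleC_minus_left)

lemma scaleC_sum_right: "c *\<^sub>C sum f A = (\<Sum>i\<in>A. c *\<^sub>C (f i::'a::complex_vector))"
  by (induction A rule: infinite_finite_induct) (simp_all add: scaleC_add_right)

lemma scaleC_one' [simp]: "(1::complex) *\<^sub>C x = (x::'a::complex_vector)"
  by (rule scaleC_one)

lemma scaleC_scaleR_comm: "c *\<^sub>C (r *\<^sub>R (x::'a::complex_vector)) = r *\<^sub>R (c *\<^sub>C x)"
  by (simp add: scaleR_scaleC scaleC_scaleC mult.commute)

lemma cinner_zero_left [simp]: "cinner 0 (y::'a::complex_inner) = 0"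
proof -
  have "cinner (0::'a) y = cinner 0 y + cinner 0 y" by (metis cinner_add_left add_0)
  then show ?thesis by simp
qed

lemma cinner_add_right: "cinner (x::'a::complex_inner) (y + z) = cinner x y + cinner x z"
  by (metis cinner_commute cinner_add_left complex_cnj_add)

lemma cinner_scaleC_right: "cinner (x::'a::complex_inner) (c *\<^sub>C y) = cnj c * cinner x y"
  by (metis cinner_commute cinner_scaleC_left complex_cnj_mult)

lemma cinner_zero_right [simp]: "cinner (x::'a::complex_inner) 0 = 0"
  by (metis cinner_commute cinner_zero_left complex_cnj_zero)

lemma cinner_minus_left: "cinner (- x::'a::complex_inner) y = - cinner x y"
  by (metis cinner_add_left cinner_zero_left eq_neg_iff_add_eq_0 add.commute neg_eq_iff_add_eq_0)

lemma cinner_minus_right: "cinner (x::'a::complex_inner) (- y) = - cinner x y"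
  by (metis cinner_add_right add.left_inverse cinner_zero_right eq_neg_iff_add_eq_0)

lemma cinner_diff_left: "cinner (x - y::'a::complex_inner) z = cinner x z - cinner y z"
  unfolding diff_conv_add_uminus by (simp only: cinner_add_left cinner_minus_left)

lemma cinner_diff_right: "cinner (x::'a::complex_inner) (y - z) = cinner x y - cinner x z"
  unfolding diff_conv_add_uminus by (simp only: cinner_add_right cinner_minus_right)

lemma cinner_scaleR_left: "cinner (r *\<^sub>R x::'a::complex_inner) y = of_real r * cinner x y"
  by (simp add: scaleR_scaleC cinner_scaleC_left)

lemma cinner_scaleR_right: "cinner (x::'a::complex_inner) (r *\<^sub>R y) = of_real r * cinner x y"
  by (simp add: scaleR_scaleC cinner_scaleC_right)

lemma cinner_sum_left: "cinner (sum f A) (y::'a::complex_inner) = (\<Sum>i\<in>A. cinner (f i) y)"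
  by (induction A rule: infinite_finite_induct) (simp_all add: cinner_add_left)

lemma cinner_sum_right: "cinner (y::'a::complex_inner) (sum f A) = (\<Sum>i\<in>A. cinner y (f i))"
  by (induction A rule: infinite_finite_induct) (simp_all add: cinner_add_right)

lemma cinner_self_real: "cinner (x::'a::complex_inner) x = complex_of_real ((norm x)\<^sup>2)"
  by (rule cinner_self_norm)

lemma Re_cinner_self: "Re (cinner (x::'a::complex_inner) x) = (norm x)\<^sup>2"
  by (simp add: cinner_self_norm)

lemma norm_add_sq: "(norm (x + y::'a::complex_inner))\<^sup>2 = (norm x)\<^sup>2 + (norm y)\<^sup>2 + 2 * Re (cinner x y)"
proof -
  have "Re (cinner (x+y) (x+y)) = Re (cinner x x) + Re (cinner x y) + Re (cinner y x) + Re (cinner y y)"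
    by (simp add: cinner_add_left cinner_add_right)
  moreover have "Re (cinner y x) = Re (cinner x y)" by (subst cinner_commute) simp
  ultimately show ?thesis by (simp add: Re_cinner_self)
qed

lemma norm_diff_sq: "(norm (x - y::'a::complex_inner))\<^sup>2 = (norm x)\<^sup>2 + (norm y)\<^sup>2 - 2 * Re (cinner x y)"
  using norm_add_sq[of x "- y"] by (simp add: cinner_minus_right)

lemma cinner_eq_zero_self: "cinner (x::'a::complex_inner) x = 0 \<longleftrightarrow> x = 0"
  by (simp add: cinner_self_norm)

lemma cauchy_schwarz: "cmod (cinner (x::'a::complex_inner) y) \<le> norm x * norm y"
proof (cases "y = 0")
  case True then show ?thesis by simp
next
  case False
  define c where "c = cinner x y"
  define n where "n = (norm y)\<^sup>2"
  have n: "n > 0" using False by (simp add: n_def)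
  define t where "t = c / complex_of_real n"
  have e: "cinner (x - t *\<^sub>C y) (x - t *\<^sub>C y) =
      cinner x x - cnj t * cinner x y - t * cinner y x + t * cnj t * cinner y y"
    by (simp add: cinner_diff_left cinner_diff_right cinner_scaleC_left cinner_scaleC_right algebra_simps)
  have yx: "cinner y x = cnj c" by (simp add: c_def cinner_commute[of y x])
  have yy: "cinner y y = of_real n" by (simp add: n_def cinner_self_norm del: of_real_power)
  have "cinner (x - t *\<^sub>C y) (x - t *\<^sub>C y) = cinner x x - c * cnj c / of_real n"
    using n unfolding e unfolding yx yy c_def[symmetric] t_def by (simp add: field_simps del: of_real_power)
  then have "Re (cinner (x - t *\<^sub>C y) (x - t *\<^sub>C y)) = Re (cinner x x) - (cmod c)\<^sup>2 / n"
    by (simp add: complex_mult_cnj cmod_power2)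
  then have "(norm (x - t *\<^sub>C y))\<^sup>2 = (norm x)\<^sup>2 - (cmod c)\<^sup>2 / n" by (simp add: Re_cinner_self)
  then have "(cmod c)\<^sup>2 / n \<le> (norm x)\<^sup>2" by (smt (verit) zero_le_power2)
  then have "(cmod c)\<^sup>2 \<le> (norm x)\<^sup>2 * (norm y)\<^sup>2" using n by (simp add: n_def field_simps)
  then have "(cmod c)\<^sup>2 \<le> (norm x * norm y)\<^sup>2" by (simp add: power_mult_distrib)
  then show ?thesis unfolding c_def using power2_le_imp_le by (metis mult_nonneg_nonneg norm_ge_zero)
qed

lemma cinner_bounded_bilinear: "bounded_bilinear (cinner :: 'a::complex_inner \<Rightarrow> 'a \<Rightarrow> complex)"
proof
  fix a a' b b' :: 'a and r :: real
  show "cinner (a + a') b = cinner a b + cinner a' b" by (rule cinner_add_left)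
  show "cinner a (b + b') = cinner a b + cinner a b'" by (rule cinner_add_right)
  show "cinner (r *\<^sub>R a) b = r *\<^sub>R cinner a b" by (simp add: cinner_scaleR_left scaleR_conv_of_real)
  show "cinner a (r *\<^sub>R b) = r *\<^sub>R cinner a b" by (simp add: cinner_scaleR_right scaleR_conv_of_real)
  show "\<exists>K. \<forall>a b::'a. cmod (cinner a b) \<le> norm a * norm b * K"
    by (rule exI[of _ 1]) (simp add: cauchy_schwarz)
qed

lemma tendsto_cinner [tendsto_intros]:
  "(f \<longlongrightarrow> a) F \<Longrightarrow> (g \<longlongrightarrow> b) F \<Longrightarrow> ((\<lambda>x. cinner (f x) (g x)) \<longlongrightarrow> cinner a b) F"
  by (rule bounded_bilinear.tendsto[OF cinner_bounded_bilinear])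

lemma continuous_on_cinner_left: "continuous_on S (\<lambda>x::'a::complex_inner. cinner x y)"
  by (intro continuous_intros bounded_bilinear.continuous_on[OF cinner_bounded_bilinear])

lemma continuous_on_cinner_right: "continuous_on S (\<lambda>y::'a::complex_inner. cinner x y)"
  by (intro continuous_intros bounded_bilinear.continuous_on[OF cinner_bounded_bilinear])

lemma vector_eqI_cinner: "(\<And>z. cinner (x::'a::complex_inner) z = cinner y z) \<Longrightarrow> x = y"
proof -
  assume h: "\<And>z. cinner x z = cinner y z"
  have "cinner (x - y) (x - y) = 0" by (simp add: cinner_diff_left h)
  then show "x = y" by (simp add: cinner_eq_zero_self)
qed

section \<open>Bounded complex-linear operators\<close>

lemma bclinD_add: "bounded_clinear f \<Longrightarrow> f (x + y) = f x + f y"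
  by (simp add: bounded_clinear_def clinear_def)

lemma bclinD_scaleC: "bounded_clinear f \<Longrightarrow> f (c *\<^sub>C x) = c *\<^sub>C f x"
  by (simp add: bounded_clinear_def clinear_def)

lemma bclin_blin: "bounded_clinear f \<Longrightarrow> bounded_linear f"
proof -
  assume f: "bounded_clinear f"
  then obtain K where K: "\<And>x. norm (f x) \<le> norm x * K" by (auto simp: bounded_clinear_def)
  show ?thesis
  proof (rule bounded_linear_intro)
    show "f (x + y) = f x + f y" for x y by (rule bclinD_add[OF f])
    show "f (r *\<^sub>R x) = r *\<^sub>R f x" for r x using bclinD_scaleC[OF f] by (simp add: scaleR_scaleC)
    show "norm (f x) \<le> norm x * K" for x by (rule K)
  qed
qed

lemma bclin_bound: "bounded_clinear f \<Longrightarrow> \<exists>K\<ge>0. \<forall>x. norm (f x) \<le> norm x * K"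
  using bounded_linear.nonneg_bounded[OF bclin_blin] by blast

lemma bclin_zero [simp]: "bounded_clinear f \<Longrightarrow> f 0 = 0"
  using linear_simps(3)[OF bclin_blin] .

lemma bclin_diff: "bounded_clinear f \<Longrightarrow> f (x - y) = f x - f y"
  using linear_simps(2)[OF bclin_blin] .

lemma bclin_minus: "bounded_clinear f \<Longrightarrow> f (- x) = - f x"
  using linear_simps(4)[OF bclin_blin] .

lemma bclin_scaleR: "bounded_clinear f \<Longrightarrow> f (r *\<^sub>R x) = r *\<^sub>R f x"
  using linear_simps(5)[OF bclin_blin] .

lemma bclin_sum: "bounded_clinear f \<Longrightarrow> f (sum g A) = (\<Sum>i\<in>A. f (g i))"
  using real_vector.linear_sum[OF bounded_linear.linear[OF bclin_blin]] .

lemma bclin_tendsto: "bounded_clinear f \<Longrightarrow> (g \<longlongrightarrow> a) F \<Longrightarrow> ((\<lambda>x. f (g x)) \<longlongrightarrow> f a) F"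
  using bounded_linear.tendsto[OF bclin_blin] .

lemma bclin_continuous_on: "bounded_clinear f \<Longrightarrow> continuous_on S f"
  using linear_continuous_on[OF bclin_blin] .

lemma bclin_intro:
  assumes "\<And>x y. f (x + y) = f x + f y" "\<And>c x. f (c *\<^sub>C x) = c *\<^sub>C f x" "\<And>x. norm (f x) \<le> norm x * K"
  shows "bounded_clinear f"
  using assms unfolding bounded_clinear_def clinear_def by blast

lemma bclin_id: "bounded_clinear (\<lambda>x. x)"
  by (rule bclin_intro[where K=1]) auto

lemma bclin_id': "bounded_clinear id"
  using bclin_id by (simp add: id_def)

lemma bclin_comp: "bounded_clinear f \<Longrightarrow> bounded_clinear g \<Longrightarrow> bounded_clinear (f \<circ> g)"
proof -
  assume f: "bounded_clinear f" and g: "bounded_clinear g"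
  obtain K1 where K1: "K1 \<ge> 0" "\<And>x. norm (f x) \<le> norm x * K1" using bclin_bound[OF f] by blast
  obtain K2 where K2: "K2 \<ge> 0" "\<And>x. norm (g x) \<le> norm x * K2" using bclin_bound[OF g] by blast
  show ?thesis
  proof (rule bclin_intro[where K="K2*K1"])
    show "(f \<circ> g) (x + y) = (f \<circ> g) x + (f \<circ> g) y" for x y by (simp add: bclinD_add f g)
    show "(f \<circ> g) (c *\<^sub>C x) = c *\<^sub>C (f \<circ> g) x" for c x by (simp add: bclinD_scaleC f g)
    show "norm ((f \<circ> g) x) \<le> norm x * (K2 * K1)" for x
    proof -
      have "norm (f (g x)) \<le> norm (g x) * K1" by (rule K1(2))
      also have "\<dots> \<le> norm x * K2 * K1" using K2 K1(1) by (simp add: mult_right_mono)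
      finally show ?thesis by (simp add: mult.assoc)
    qed
  qed
qed

lemma bclin_funpow: "bounded_clinear (f::'a::complex_normed_vector \<Rightarrow> 'a) \<Longrightarrow> bounded_clinear (f ^^ n)"
proof (induction n)
  case 0 then show ?case by (simp only: funpow.simps(1) bclin_id')
next
  case (Suc n) then show ?case by (simp only: funpow.simps(2)) (rule bclin_comp; simp)
qed

lemma bclin_add_op: "bounded_clinear f \<Longrightarrow> bounded_clinear g \<Longrightarrow> bounded_clinear (\<lambda>x. f x + g x)"
proof -
  assume f: "bounded_clinear f" and g: "bounded_clinear g"
  obtain K1 where K1: "K1 \<ge> 0" "\<And>x. norm (f x) \<le> norm x * K1" using bclin_bound[OF f] by blast
  obtain K2 where K2: "K2 \<ge> 0" "\<And>x. norm (g x) \<le> norm x * K2" using bclin_bound[OF g] by blast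
  show ?thesis
  proof (rule bclin_intro[where K="K1+K2"])
    show "f (x + y) + g (x + y) = f x + g x + (f y + g y)" for x y by (simp add: bclinD_add f g)
    show "f (c *\<^sub>C x) + g (c *\<^sub>C x) = c *\<^sub>C (f x + g x)" for c x by (simp add: bclinD_scaleC f g scaleC_add_right)
    show "norm (f x + g x) \<le> norm x * (K1 + K2)" for x
      using norm_triangle_ineq[of "f x" "g x"] K1(2)[of x] K2(2)[of x] by (simp add: distrib_left)
  qed
qed

lemma bclin_scale_op: "bounded_clinear f \<Longrightarrow> bounded_clinear (\<lambda>x. c *\<^sub>C f x)"
proof -
  assume f: "bounded_clinear f"
  obtain K1 where K1: "K1 \<ge> 0" "\<And>x. norm (f x) \<le> norm x * K1" using bclin_bound[OF f] by blast
  show ?thesis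
  proof (rule bclin_intro[where K="cmod c * K1"])
    show "c *\<^sub>C f (x + y) = c *\<^sub>C f x + c *\<^sub>C f y" for x y by (simp add: bclinD_add f scaleC_add_right)
    show "c *\<^sub>C f (d *\<^sub>C x) = d *\<^sub>C (c *\<^sub>C f x)" for d x by (simp add: bclinD_scaleC f scaleC_scaleC mult.commute)
    show "norm (c *\<^sub>C f x) \<le> norm x * (cmod c * K1)" for x
      using K1(2)[of x] by (simp add: norm_scaleC) (metis mult.left_commute mult_left_mono norm_ge_zero)
  qed
qed

lemma bclin_diff_op: "bounded_clinear f \<Longrightarrow> bounded_clinear g \<Longrightarrow> bounded_clinear (\<lambda>x. f x - g x)"
proof -
  assume f: "bounded_clinear f" and g: "bounded_clinear g"
  have "bounded_clinear (\<lambda>x. f x + (-1) *\<^sub>C g x)"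
    by (rule bclin_add_op[OF f bclin_scale_op[OF g]])
  moreover have "(\<lambda>x. f x + (-1) *\<^sub>C g x) = (\<lambda>x. f x - g x)"
    by (simp add: scaleC_minus_left)
  ultimately show ?thesis by simp
qed

lemma eq_on_dense:
  fixes f g :: "'a::metric_space \<Rightarrow> 'b::metric_space"
  assumes "continuous_on UNIV f" "continuous_on UNIV g" "closure S = UNIV" "\<And>x. x \<in> S \<Longrightarrow> f x = g x"
  shows "f = g"
proof
  fix x
  have c: "continuous_on (closure S) (\<lambda>x. dist (f x) (g x))"
    using assms by (intro continuous_on_dist) auto
  have "dist (f x) (g x) = 0"
    by (rule continuous_constant_on_closure[OF c]) (auto simp: assms)
  then show "f x = g x" by simp
qed

lemma bclin_eq_on_dense:
  assumes "bounded_clinear f" "bounded_clinear g" "closure S = UNIV" "\<And>x. x \<in> S \<Longrightarrow> f x = g x"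
  shows "f = g"
  using eq_on_dense[of f g S] assms bclin_continuous_on by blast

lemma orth_dense_zero:
  fixes w :: "'a::complex_inner"
  assumes "closure S = UNIV" "\<And>x. x \<in> S \<Longrightarrow> cinner w x = 0"
  shows "w = 0"
proof -
  have "(\<lambda>x. cinner w x) = (\<lambda>x. 0)"
    using eq_on_dense[of "\<lambda>x. cinner w x" "\<lambda>x. 0" S] assms continuous_on_cinner_right by auto
  then have "cinner w w = 0" by metis
  then show ?thesis by (simp add: cinner_eq_zero_self)
qed



section \<open>Cesaro averages\<close>

definition cesaro :: "(nat \<Rightarrow> 'a::real_normed_vector) \<Rightarrow> nat \<Rightarrow> 'a" where
  "cesaro x N = (1 / real N) *\<^sub>R (\<Sum>n<N. x n)"

lemma lim_const_over_n: "(\<lambda>N. c / real N) \<longlonglongrightarrow> 0"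
proof -
  have "(\<lambda>N. c * (1 / real N)) \<longlonglongrightarrow> c * 0"
    by (intro tendsto_mult tendsto_const lim_inverse_n')
  then show ?thesis by simp
qed

lemma shift_sum_bound:
  fixes x :: "nat \<Rightarrow> 'a::real_normed_vector"
  assumes "\<And>n. norm (x n) \<le> C"
  shows "norm ((\<Sum>n<N. x (n + h)) - (\<Sum>n<N. x n)) \<le> 2 * real h * C"
proof (induction h)
  case 0 then show ?case by simp
next
  case (Suc h)
  have "(\<Sum>n<N. x (n + Suc h)) - (\<Sum>n<N. x (n + h)) = (\<Sum>n<N. x (Suc n + h) - x (n + h))"
    by (simp add: sum_subtractf)
  also have "\<dots> = x (N + h) - x (0 + h)"
    by (rule sum_lessThan_telescope[where f="\<lambda>n. x (n + h)"])
  finally have e: "(\<Sum>n<N. x (n + Suc h)) - (\<Sum>n<N. x n) =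
      ((\<Sum>n<N. x (n + h)) - (\<Sum>n<N. x n)) + (x (N + h) - x h)"
    by (simp add: algebra_simps)
  have "norm (x (N + h) - x h) \<le> 2 * C"
    using norm_triangle_ineq4[of "x (N+h)" "x h"] assms[of "N+h"] assms[of h] by linarith
  then show ?case unfolding e using Suc norm_triangle_ineq[of "(\<Sum>n<N. x (n + h)) - (\<Sum>n<N. x n)" "x (N + h) - x h"]
    by (simp add: algebra_simps)
qed

lemma cesaro_shift:
  fixes x :: "nat \<Rightarrow> 'a::real_normed_vector"
  assumes "\<And>n. norm (x n) \<le> C"
  shows "(\<lambda>N. cesaro (\<lambda>n. x (n + h)) N - cesaro x N) \<longlonglongrightarrow> 0"
proof (rule Lim_null_comparison)
  show "\<forall>\<^sub>F N in sequentially. norm (cesaro (\<lambda>n. x (n + h)) N - cesaro x N) \<le> (2 * real h * C) / real N"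
  proof (rule always_eventually, rule allI)
    fix N
    have "norm (cesaro (\<lambda>n. x (n + h)) N - cesaro x N) = norm ((\<Sum>n<N. x (n + h)) - (\<Sum>n<N. x n)) / real N"
      by (simp add: cesaro_def scaleR_diff_right[symmetric] divide_inverse mult.commute)
    also have "\<dots> \<le> (2 * real h * C) / real N"
      using shift_sum_bound[where x=x and C=C and N=N and h=h, OF assms] by (simp add: divide_right_mono)
    finally show "norm (cesaro (\<lambda>n. x (n + h)) N - cesaro x N) \<le> (2 * real h * C) / real N" .
  qed
  show "(\<lambda>N. 2 * real h * C / real N) \<longlonglongrightarrow> 0" by (rule lim_const_over_n)
qed

lemma cesaro_shift':
  fixes x :: "nat \<Rightarrow> 'a::real_normed_vector"
  assumes "\<And>n. norm (x n) \<le> C" "cesaro x \<longlonglongrightarrow> L"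
  shows "(\<lambda>N. cesaro (\<lambda>n. x (n + h)) N) \<longlonglongrightarrow> L"
proof -
  have "(\<lambda>N. (cesaro (\<lambda>n. x (n + h)) N - cesaro x N) + cesaro x N) \<longlonglongrightarrow> 0 + L"
    by (intro tendsto_add cesaro_shift[OF assms(1)] assms(2))
  then show ?thesis by simp
qed

lemma cesaro_const: "(\<lambda>N. cesaro (\<lambda>n. c) N) \<longlonglongrightarrow> c"
proof (rule tendsto_eventually)
  show "\<forall>\<^sub>F N in sequentially. cesaro (\<lambda>n. c) N = c"
    using eventually_ge_at_top[of "1::nat"]
    by eventually_elim (simp add: cesaro_def sum_constant_scaleR)
qed

lemma cesaro_add: "cesaro (\<lambda>n. x n + y n) N = cesaro x N + cesaro y N"
  by (simp add: cesaro_def sum.distrib scaleR_add_right)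

lemma cesaro_diff: "cesaro (\<lambda>n. x n - y n) N = cesaro x N - cesaro y N"
  by (simp add: cesaro_def sum_subtractf scaleR_diff_right)

lemma cesaro_scaleR: "cesaro (\<lambda>n. r *\<^sub>R x n) N = r *\<^sub>R cesaro x N"
  by (simp add: cesaro_def scaleR_sum_right[symmetric])

lemma cesaro_cnj: "cesaro (\<lambda>n. cnj (x n)) N = cnj (cesaro x N)"
  by (simp add: cesaro_def scaleR_conv_of_real)

lemma cesaro_complex: "cesaro (x :: nat \<Rightarrow> complex) N = of_real (1 / real N) * (\<Sum>n<N. x n)"
  by (simp add: cesaro_def scaleR_conv_of_real)

lemma cesaro_real: "cesaro (x :: nat \<Rightarrow> real) N = (\<Sum>n<N. x n) / real N"
  by (simp add: cesaro_def)

lemma norm_cesaro_le: "norm (cesaro x N) \<le> cesaro (\<lambda>n. norm (x n)) N"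
proof -
  have "norm (cesaro x N) = (1 / real N) * norm (\<Sum>n<N. x n)" by (simp add: cesaro_def)
  also have "\<dots> \<le> (1 / real N) * (\<Sum>n<N. norm (x n))"
    by (intro mult_left_mono norm_sum) auto
  finally show ?thesis by (simp add: cesaro_def)
qed

lemma cesaro_le_bound:
  assumes "\<And>n. norm (x n) \<le> C"
  shows "norm (cesaro x N) \<le> C"
proof (cases "N = 0")
  case True
  have "norm (cesaro x N) = 0" by (simp add: cesaro_def True)
  moreover have "0 \<le> C" using assms[of 0] norm_ge_zero order_trans by blast
  ultimately show ?thesis by simp
next
  case False
  have "norm (cesaro x N) \<le> cesaro (\<lambda>n. norm (x n)) N" by (rule norm_cesaro_le)
  also have "\<dots> = (\<Sum>n<N. norm (x n)) / real N" by (simp add: cesaro_real)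
  also have "\<dots> \<le> (\<Sum>n<N. C) / real N"
    by (intro divide_right_mono sum_mono assms) auto
  also have "\<dots> = C" using False by simp
  finally show ?thesis .
qed

lemma approx_zero:
  fixes a :: "nat \<Rightarrow> real"
  assumes "\<And>N. 0 \<le> a N"
    and "\<And>e. e > 0 \<Longrightarrow> \<exists>b B. b \<longlonglongrightarrow> B \<and> B \<le> e \<and> (\<forall>N. a N \<le> b N)"
  shows "a \<longlonglongrightarrow> 0"
proof (rule LIMSEQ_I)
  fix r :: real assume r: "r > 0"
  obtain b B where b: "b \<longlonglongrightarrow> B" "B \<le> r / 2" "\<forall>N. a N \<le> b N"
    using assms(2)[of "r/2"] r by auto
  obtain no where no: "\<forall>n\<ge>no. norm (b n - B) < r / 2"
    using LIMSEQ_D[OF b(1), of "r/2"] r by auto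
  show "\<exists>no. \<forall>n\<ge>no. norm (a n - 0) < r"
  proof (intro exI allI impI)
    fix n assume "n \<ge> no"
    then have "\<bar>b n - B\<bar> < r / 2" using no by simp
    then have "b n < B + r / 2" by arith
    then show "norm (a n - 0) < r" using b(2) b(3)[rule_format, of n] assms(1)[of n] by simp
  qed
qed

lemma cesaro_subseq:
  fixes f :: "nat \<Rightarrow> real"
  assumes f: "\<And>n. 0 \<le> f n" and lim: "(\<lambda>N. (\<Sum>n<N. f n) / real N) \<longlonglongrightarrow> 0" and m: "m > 0"
  shows "(\<lambda>N. (\<Sum>n<N. f (n * m)) / real N) \<longlonglongrightarrow> 0"
proof -
  define g where "g = (\<lambda>N. (\<Sum>n<N. f n) / real N)"
  have sm: "strict_mono (\<lambda>N. N * m)" using m by (simp add: strict_mono_def)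
  have "(g \<circ> (\<lambda>N. N * m)) \<longlonglongrightarrow> 0" using LIMSEQ_subseq_LIMSEQ[OF lim[folded g_def] sm] .
  then have g2: "(\<lambda>N. real m * g (N * m)) \<longlonglongrightarrow> real m * 0"
    by (intro tendsto_mult tendsto_const) (simp add: o_def)
  show ?thesis
  proof (rule Lim_null_comparison[OF always_eventually[OF allI]])
    fix N
    have s: "(\<Sum>n<N. f (n * m)) \<le> (\<Sum>j<N*m. f j)"
    proof -
      have "(\<Sum>n<N. f (n * m)) = (\<Sum>j\<in>(\<lambda>n. n * m) ` {..<N}. f j)"
        using m by (subst sum.reindex) (auto simp: inj_on_def)
      also have "\<dots> \<le> (\<Sum>j<N*m. f j)"
        by (rule sum_mono2) (auto simp: f m)
      finally show ?thesis .
    qed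
    have "norm ((\<Sum>n<N. f (n * m)) / real N) = (\<Sum>n<N. f (n * m)) / real N"
      using f by (simp add: sum_nonneg)
    also have "\<dots> \<le> real m * g (N * m)"
    proof (cases "N = 0")
      case True then show ?thesis by (simp add: g_def)
    next
      case False
      have "(\<Sum>n<N. f (n * m)) / real N \<le> (\<Sum>j<N*m. f j) / real N"
        using s by (simp add: divide_right_mono)
      also have "\<dots> = real m * g (N * m)" using False m by (simp add: g_def)
      finally show ?thesis .
    qed
    finally show "norm ((\<Sum>n<N. f (n * m)) / real N) \<le> real m * g (N * m)" .
  qed (use g2 in simp)
qed



lemma double_sum_dist:
  fixes f :: "nat \<Rightarrow> real"
  assumes f: "\<And>d. 0 \<le> f d"
  shows "(\<Sum>h<H. \<Sum>h'<H. f (if h' \<le> h then h - h' else h' - h)) \<le> 2 * real H * (\<Sum>d<H. f d)"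
proof -
  have each: "(\<Sum>h'<H. f (if h' \<le> h then h - h' else h' - h)) \<le> 2 * (\<Sum>d<H. f d)" if hH: "h < H" for h
  proof -
    have "(\<Sum>h'<H. f (if h' \<le> h then h - h' else h' - h)) = (\<Sum>h'<H. if h' \<le> h then f (h - h') else f (h' - h))"
      by (rule sum.cong) auto
    also have "\<dots> = (\<Sum>h'\<in>{..<H} \<inter> {h'. h' \<le> h}. f (h - h')) + (\<Sum>h'\<in>{..<H} \<inter> - {h'. h' \<le> h}. f (h' - h))"
      by (rule sum.If_cases) simp
    also have "(\<Sum>h'\<in>{..<H} \<inter> {h'. h' \<le> h}. f (h - h')) \<le> (\<Sum>d<H. f d)"
    proof -
      have "(\<Sum>h'\<in>{..<H} \<inter> {h'. h' \<le> h}. f (h - h')) = (\<Sum>d\<in>(\<lambda>h'. h - h') ` ({..<H} \<inter> {h'. h' \<le> h}). f d)"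
        by (subst sum.reindex) (auto simp: inj_on_def)
      also have "\<dots> \<le> (\<Sum>d<H. f d)"
        by (rule sum_mono2) (use hH f in auto)
      finally show ?thesis .
    qed
    also have "(\<Sum>h'\<in>{..<H} \<inter> - {h'. h' \<le> h}. f (h' - h)) \<le> (\<Sum>d<H. f d)"
    proof -
      have "(\<Sum>h'\<in>{..<H} \<inter> - {h'. h' \<le> h}. f (h' - h)) = (\<Sum>d\<in>(\<lambda>h'. h' - h) ` ({..<H} \<inter> - {h'. h' \<le> h}). f d)"
        by (subst sum.reindex) (auto simp: inj_on_def)
      also have "\<dots> \<le> (\<Sum>d<H. f d)"
        by (rule sum_mono2) (use hH f in auto)
      finally show ?thesis .
    qed
    finally show ?thesis by simp
  qed
  have "(\<Sum>h<H. \<Sum>h'<H. f (if h' \<le> h then h - h' else h' - h)) \<le> (\<Sum>h<H. 2 * (\<Sum>d<H. f d))"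
    by (rule sum_mono) (use each in auto)
  also have "\<dots> = 2 * real H * (\<Sum>d<H. f d)" by simp
  finally show ?thesis .
qed

lemma cesaro_sq_le:
  fixes a :: "nat \<Rightarrow> real"
  shows "(cesaro a N)\<^sup>2 \<le> cesaro (\<lambda>n. (a n)\<^sup>2) N"
proof (cases "N = 0")
  case True then show ?thesis by (simp add: cesaro_def)
next
  case False
  have "(cesaro a N)\<^sup>2 = (\<Sum>n<N. a n)\<^sup>2 / (real N)\<^sup>2" by (simp add: cesaro_real power_divide)
  also have "\<dots> \<le> ((\<Sum>n<N. (a n)\<^sup>2) * real N) / (real N)\<^sup>2"
    using sum_squared_le_sum_of_squares[of a "{..<N}"] by (simp add: divide_right_mono)
  also have "\<dots> = cesaro (\<lambda>n. (a n)\<^sup>2) N" using False by (simp add: cesaro_real power2_eq_square)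
  finally show ?thesis .
qed

lemma cesaro_Re: "cesaro (\<lambda>n. Re (z n)) N = Re (cesaro z N)"
  by (simp add: cesaro_def)

lemma cesaro_mult_const: "cesaro (\<lambda>n. k * (z n :: complex)) N = k * cesaro z N"
  by (simp only: cesaro_complex sum_distrib_left[symmetric] mult.left_commute)

lemma cesaro_sum: "cesaro (\<lambda>n. \<Sum>i\<in>A. z i n) N = (\<Sum>i\<in>A. cesaro (z i) N)"
  by (simp add: cesaro_def scaleR_sum_right sum.swap[of _ A])

lemma vdc:
  fixes x :: "nat \<Rightarrow> 'a::complex_inner" and L :: "nat \<Rightarrow> complex"
  assumes bd: "\<And>n. norm (x n) \<le> C"
    and lim: "\<And>d. (\<lambda>N. cesaro (\<lambda>n. cinner (x (n + d)) (x n)) N) \<longlonglongrightarrow> L d"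
    and cesL: "(\<lambda>H. (\<Sum>d<H. cmod (L d)) / real H) \<longlonglongrightarrow> 0"
  shows "cesaro x \<longlonglongrightarrow> 0"
proof -
  have C0: "C \<ge> 0" using bd[of 0] norm_ge_zero order_trans by blast
  have "(\<lambda>N. norm (cesaro x N)) \<longlonglongrightarrow> 0"
  proof (rule approx_zero)
    fix e :: real assume e: "e > 0"
    have "e\<^sup>2 / 2 > 0" using e by simp
    then obtain no where no: "\<forall>n\<ge>no. norm ((\<Sum>d<n. cmod (L d)) / real n - 0) < e\<^sup>2 / 2"
      using LIMSEQ_D[OF cesL] by blast
    define H where "H = max no 1"
    have H1: "H \<ge> 1" by (simp add: H_def)
    have Hsmall: "(\<Sum>d<H. cmod (L d)) / real H < e\<^sup>2 / 2"
      using no[rule_format, of H] by (simp add: H_def abs_of_nonneg sum_nonneg)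
    define y where "y n = (1 / real H) *\<^sub>R (\<Sum>h<H. x (n + h))" for n
    define g where "g N = cesaro (\<lambda>n. (norm (y n))\<^sup>2) N" for N
    define Lp where "Lp h h' = (if h' \<le> h then L (h - h') else cnj (L (h' - h)))" for h h'
    define K where "K = complex_of_real (1 / real H) * complex_of_real (1 / real H)"
    define G where "G = Re (K * (\<Sum>h<H. \<Sum>h'<H. Lp h h'))"
    show "\<exists>b B. b \<longlonglongrightarrow> B \<and> B \<le> e \<and> (\<forall>N. norm (cesaro x N) \<le> b N)"
    proof (intro exI conjI)
      have cy: "cesaro y N = (1 / real H) *\<^sub>R (\<Sum>h<H. cesaro (\<lambda>n. x (n + h)) N)" for N
        by (simp add: y_def cesaro_def scaleR_sum_right sum.swap[of _ "{..<H}"] mult.commute)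
      have cx: "cesaro x N = (1 / real H) *\<^sub>R (\<Sum>h<H. cesaro x N)" for N
        using H1 by (simp add: sum_constant_scaleR)
      have "(\<lambda>N. (1 / real H) *\<^sub>R (\<Sum>h<H. cesaro x N - cesaro (\<lambda>n. x (n + h)) N)) \<longlonglongrightarrow> (1 / real H) *\<^sub>R (\<Sum>h<H. 0)"
      proof (intro tendsto_scaleR tendsto_const tendsto_sum)
        fix h
        have "(\<lambda>N. - (cesaro (\<lambda>n. x (n + h)) N - cesaro x N)) \<longlonglongrightarrow> - 0"
          by (intro tendsto_minus cesaro_shift[OF bd])
        then show "(\<lambda>N. cesaro x N - cesaro (\<lambda>n. x (n + h)) N) \<longlonglongrightarrow> 0" by simp
      qed
      moreover have "(1 / real H) *\<^sub>R (\<Sum>h<H. cesaro x N - cesaro (\<lambda>n. x (n + h)) N) = cesaro x N - cesaro y N" for N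
        by (subst cx, subst cy) (simp add: sum_subtractf scaleR_diff_right)
      ultimately have p1: "(\<lambda>N. cesaro x N - cesaro y N) \<longlonglongrightarrow> 0" by simp
      have ynorm: "(norm (y n))\<^sup>2 = Re (K * (\<Sum>h<H. \<Sum>h'<H. cinner (x (n + h)) (x (n + h'))))" for n
      proof -
        have "(norm (y n))\<^sup>2 = Re (cinner (y n) (y n))" by (simp add: Re_cinner_self)
        also have "cinner (y n) (y n) = K * (\<Sum>h<H. \<Sum>h'<H. cinner (x (n + h)) (x (n + h')))"
          unfolding y_def K_def cinner_scaleR_left cinner_sum_left cinner_scaleR_right cinner_sum_right
          by (simp only: sum_distrib_left mult.assoc, subst sum.swap, rule refl)
        finally show ?thesis .
      qed
      have gN: "g N = Re (K * (\<Sum>h<H. \<Sum>h'<H. cesaro (\<lambda>n. cinner (x (n + h)) (x (n + h'))) N))" for N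
        unfolding g_def ynorm cesaro_Re cesaro_mult_const cesaro_sum ..
      have lim2: "(\<lambda>N. cesaro (\<lambda>n. cinner (x (n + h)) (x (n + h'))) N) \<longlonglongrightarrow> Lp h h'" for h h'
      proof -
        have a_bd: "norm (cinner (x (n + d)) (x n)) \<le> C * C" for n d
          using cauchy_schwarz[of "x (n + d)" "x n"] bd[of "n+d"] bd[of n] C0
          by (smt (verit) mult_mono norm_ge_zero)
        have case1: "(\<lambda>N. cesaro (\<lambda>n. cinner (x (n + h)) (x (n + h'))) N) \<longlonglongrightarrow> L (h - h')" if "h' \<le> h" for h h'
        proof -
          have "(\<lambda>N. cesaro (\<lambda>n. (\<lambda>m. cinner (x (m + (h - h'))) (x m)) (n + h')) N) \<longlonglongrightarrow> L (h - h')"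
            by (rule cesaro_shift'[OF a_bd lim])
          moreover have "(\<lambda>n. (\<lambda>m. cinner (x (m + (h - h'))) (x m)) (n + h')) = (\<lambda>n. cinner (x (n + h)) (x (n + h')))"
            using that by (auto simp: algebra_simps)
          ultimately show ?thesis by simp
        qed
        show ?thesis
        proof (cases "h' \<le> h")
          case True then show ?thesis using case1 by (simp add: Lp_def)
        next
          case False
          then have "(\<lambda>N. cnj (cesaro (\<lambda>n. cinner (x (n + h')) (x (n + h))) N)) \<longlonglongrightarrow> cnj (L (h' - h))"
            by (intro tendsto_cnj case1) simp
          moreover have "cnj (cesaro (\<lambda>n. cinner (x (n + h')) (x (n + h))) N) = cesaro (\<lambda>n. cinner (x (n + h)) (x (n + h'))) N" for N
            by (subst cesaro_cnj[symmetric]) (metis cinner_commute)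
          ultimately show ?thesis using False by (simp add: Lp_def)
        qed
      qed
      have p2: "g \<longlonglongrightarrow> G"
        unfolding gN G_def by (intro tendsto_Re tendsto_mult tendsto_const tendsto_sum lim2)
      show "(\<lambda>N. norm (cesaro x N - cesaro y N) + sqrt (g N)) \<longlonglongrightarrow> 0 + sqrt G"
        by (intro tendsto_add tendsto_real_sqrt p2 tendsto_norm_zero p1)
      have "G \<le> cmod (K * (\<Sum>h<H. \<Sum>h'<H. Lp h h'))" unfolding G_def by (rule complex_Re_le_cmod)
      also have "\<dots> = (1 / real H) * (1 / real H) * cmod (\<Sum>h<H. \<Sum>h'<H. Lp h h')"
        unfolding K_def norm_mult norm_of_real by simp
      also have "\<dots> \<le> (1 / real H) * (1 / real H) * (\<Sum>h<H. \<Sum>h'<H. cmod (Lp h h'))"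
      proof (rule mult_left_mono)
        show "cmod (\<Sum>h<H. \<Sum>h'<H. Lp h h') \<le> (\<Sum>h<H. \<Sum>h'<H. cmod (Lp h h'))"
          by (rule order_trans[OF norm_sum sum_mono[OF norm_sum]])
      qed simp
      also have "(\<Sum>h<H. \<Sum>h'<H. cmod (Lp h h')) = (\<Sum>h<H. \<Sum>h'<H. cmod (L (if h' \<le> h then h - h' else h' - h)))"
        by (intro sum.cong refl) (simp add: Lp_def)
      also have "(1 / real H) * (1 / real H) * (\<Sum>h<H. \<Sum>h'<H. cmod (L (if h' \<le> h then h - h' else h' - h)))
          \<le> (1 / real H) * (1 / real H) * (2 * real H * (\<Sum>d<H. cmod (L d)))"
        by (rule mult_left_mono[OF double_sum_dist]) simp_all
      also have "\<dots> = 2 * ((\<Sum>d<H. cmod (L d)) / real H)" using H1 by (simp add: field_simps)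
      also have "\<dots> \<le> e\<^sup>2" using Hsmall by (simp add: mult.commute)
      finally have "sqrt G \<le> sqrt (e\<^sup>2)" by (rule real_sqrt_le_mono)
      then show "0 + sqrt G \<le> e" using e by simp
      show "\<forall>N. norm (cesaro x N) \<le> norm (cesaro x N - cesaro y N) + sqrt (g N)"
      proof
        fix N
        have "norm (cesaro y N) \<le> cesaro (\<lambda>n. norm (y n)) N" by (rule norm_cesaro_le)
        also have "\<dots> \<le> sqrt (g N)"
          unfolding g_def by (rule real_le_rsqrt[OF cesaro_sq_le])
        finally have "norm (cesaro y N) \<le> sqrt (g N)" .
        then show "norm (cesaro x N) \<le> norm (cesaro x N - cesaro y N) + sqrt (g N)"
          using norm_triangle_ineq[of "cesaro x N - cesaro y N" "cesaro y N"] by simp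
      qed
    qed
  qed simp
  then show ?thesis by (rule tendsto_norm_zero_cancel)
qed



definition unitary_pair :: "('a::complex_inner \<Rightarrow> 'a) \<Rightarrow> ('a \<Rightarrow> 'a) \<Rightarrow> bool" where
  "unitary_pair U Ui \<longleftrightarrow> bounded_clinear U \<and> bounded_clinear Ui \<and> (\<forall>x. U (Ui x) = x) \<and> (\<forall>x. Ui (U x) = x)
     \<and> (\<forall>x y. cinner (U x) (U y) = cinner x y)"

definition erg_setup :: "('a::complex_inner \<Rightarrow> 'a) \<Rightarrow> ('a \<Rightarrow> 'a) \<Rightarrow> 'a \<Rightarrow> bool" where
  "erg_setup U Ui \<Omega> \<longleftrightarrow> unitary_pair U Ui \<and> U \<Omega> = \<Omega> \<and> norm \<Omega> = 1 \<and>
     (\<forall>u v. (\<lambda>N. (\<Sum>n<N. cmod (cinner ((U ^^ n) u) v - cinner u \<Omega> * cinner \<Omega> v)) / real N) \<longlonglongrightarrow> 0)"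

lemma up_U: "unitary_pair U Ui \<Longrightarrow> bounded_clinear U" by (simp add: unitary_pair_def)
lemma up_Ui: "unitary_pair U Ui \<Longrightarrow> bounded_clinear Ui" by (simp add: unitary_pair_def)
lemma up_UUi: "unitary_pair U Ui \<Longrightarrow> U (Ui x) = x" by (simp add: unitary_pair_def)
lemma up_UiU: "unitary_pair U Ui \<Longrightarrow> Ui (U x) = x" by (simp add: unitary_pair_def)
lemma up_iso: "unitary_pair U Ui \<Longrightarrow> cinner (U x) (U y) = cinner x y" by (simp add: unitary_pair_def)
lemma up_iso_i: "unitary_pair U Ui \<Longrightarrow> cinner (Ui x) (Ui y) = cinner x y"
  by (metis up_iso up_UUi)

lemma up_pow_iso: "unitary_pair U Ui \<Longrightarrow> cinner ((U ^^ n) x) ((U ^^ n) y) = cinner x y"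
  by (induction n arbitrary: x y) (simp_all add: up_iso)

lemma up_powi_iso: "unitary_pair U Ui \<Longrightarrow> cinner ((Ui ^^ n) x) ((Ui ^^ n) y) = cinner x y"
  by (induction n arbitrary: x y) (simp_all add: up_iso_i)

lemma norm_eq_from_cinner: "(\<And>x. cinner (f x) (f x) = cinner x x) \<Longrightarrow> norm (f x) = norm (x::'a::complex_inner)"
proof -
  assume h: "\<And>x. cinner (f x) (f x) = cinner x x"
  have "(norm (f x))\<^sup>2 = (norm x)\<^sup>2" using h[of x] by (metis Re_cinner_self)
  then show ?thesis by (simp add: power2_eq_iff_nonneg)
qed

lemma up_pow_norm: "unitary_pair U Ui \<Longrightarrow> norm ((U ^^ n) x) = norm x"
  by (rule norm_eq_from_cinner) (rule up_pow_iso)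

lemma up_powi_norm: "unitary_pair U Ui \<Longrightarrow> norm ((Ui ^^ n) x) = norm x"
  by (rule norm_eq_from_cinner) (rule up_powi_iso)

lemma up_pow_inv1: "unitary_pair U Ui \<Longrightarrow> (U ^^ n) ((Ui ^^ n) x) = x"
proof (induction n arbitrary: x)
  case 0 then show ?case by simp
next
  case (Suc n)
  have b: "(U ^^ Suc n) y = (U ^^ n) (U y)" for y by (metis funpow_Suc_right o_apply)
  have "(U ^^ Suc n) ((Ui ^^ Suc n) x) = (U ^^ n) (U (Ui ((Ui ^^ n) x)))"
    by (simp only: b) simp
  also have "\<dots> = x" using Suc by (simp add: up_UUi)
  finally show ?case .
qed

lemma up_pow_inv2: "unitary_pair U Ui \<Longrightarrow> (Ui ^^ n) ((U ^^ n) x) = x"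
proof (induction n arbitrary: x)
  case 0 then show ?case by simp
next
  case (Suc n)
  have b: "(Ui ^^ Suc n) y = (Ui ^^ n) (Ui y)" for y by (metis funpow_Suc_right o_apply)
  have "(Ui ^^ Suc n) ((U ^^ Suc n) x) = (Ui ^^ n) (Ui (U ((U ^^ n) x)))"
    by (simp only: b) simp
  also have "\<dots> = x" using Suc by (simp add: up_UiU)
  finally show ?case .
qed

lemma up_U_Ui_comm: "unitary_pair U Ui \<Longrightarrow> U (Ui x) = Ui (U x)"
  by (simp add: up_UUi up_UiU)

lemma funpow_comm_gen: "(\<And>x. f (g x) = g (f x)) \<Longrightarrow> (f ^^ a) ((g ^^ b) x) = (g ^^ b) ((f ^^ a) x)"
proof -
  assume c: "\<And>x. f (g x) = g (f x)"
  have c1: "(f ^^ a) (g x) = g ((f ^^ a) x)" for a x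
    by (induction a arbitrary: x) (simp_all add: c)
  show ?thesis by (induction b arbitrary: x) (simp_all add: c1)
qed

lemma up_pow_comm: "unitary_pair U Ui \<Longrightarrow> (U ^^ a) ((Ui ^^ b) x) = (Ui ^^ b) ((U ^^ a) x)"
  by (rule funpow_comm_gen) (rule up_U_Ui_comm)

lemma funpow_add_apply: "(f ^^ (a + b)) x = (f ^^ a) ((f ^^ b) x)"
  by (simp add: funpow_add)

lemma up_pow_sub: "unitary_pair U Ui \<Longrightarrow> b \<le> a \<Longrightarrow> (U ^^ a) ((Ui ^^ b) x) = (U ^^ (a - b)) x"
proof -
  assume up: "unitary_pair U Ui" and ba: "b \<le> a"
  have "(U ^^ a) ((Ui ^^ b) x) = (U ^^ (a - b)) ((U ^^ b) ((Ui ^^ b) x))"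
    using ba by (metis funpow_add_apply le_add_diff_inverse2)
  then show ?thesis by (simp add: up_pow_inv1[OF up])
qed

lemma up_pow_fix: "U \<Omega> = \<Omega> \<Longrightarrow> (U ^^ n) \<Omega> = \<Omega>"
  by (induction n) simp_all

lemma up_powi_fix: "unitary_pair U Ui \<Longrightarrow> U \<Omega> = \<Omega> \<Longrightarrow> (Ui ^^ n) \<Omega> = \<Omega>"
proof -
  assume up: "unitary_pair U Ui" and f: "U \<Omega> = \<Omega>"
  have "Ui \<Omega> = \<Omega>" using up_UiU[OF up, of \<Omega>] f by simp
  then show ?thesis by (induction n) simp_all
qed

lemma es_up: "erg_setup U Ui \<Omega> \<Longrightarrow> unitary_pair U Ui" by (simp add: erg_setup_def)
lemma es_fix: "erg_setup U Ui \<Omega> \<Longrightarrow> U \<Omega> = \<Omega>" by (simp add: erg_setup_def)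
lemma es_norm: "erg_setup U Ui \<Omega> \<Longrightarrow> norm \<Omega> = 1" by (simp add: erg_setup_def)
lemma es_wm: "erg_setup U Ui \<Omega> \<Longrightarrow>
   (\<lambda>N. (\<Sum>n<N. cmod (cinner ((U ^^ n) u) v - cinner u \<Omega> * cinner \<Omega> v)) / real N) \<longlonglongrightarrow> 0"
  by (simp add: erg_setup_def)

lemma es_OO: "erg_setup U Ui \<Omega> \<Longrightarrow> cinner \<Omega> \<Omega> = 1"
  by (simp add: es_norm cinner_self_norm)

lemma wm_sub:
  assumes es: "erg_setup U Ui \<Omega>" and m: "m > 0" and o: "cinner u \<Omega> = 0"
  shows "(\<lambda>H. (\<Sum>d<H. cmod (cinner ((U ^^ (d * m)) u) v)) / real H) \<longlonglongrightarrow> 0"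
proof -
  have "(\<lambda>N. (\<Sum>n<N. cmod (cinner ((U ^^ n) u) v)) / real N) \<longlonglongrightarrow> 0"
    using es_wm[OF es, of u v] o by simp
  from cesaro_subseq[where f="\<lambda>n. cmod (cinner ((U ^^ n) u) v)", OF _ this m] show ?thesis by simp
qed

lemma orth_part:
  assumes es: "erg_setup U Ui \<Omega>"
  shows "cinner (\<eta> - cinner \<eta> \<Omega> *\<^sub>C \<Omega>) \<Omega> = 0"
  by (simp add: cinner_diff_left cinner_scaleC_left es_OO[OF es])

lemma stepE:
  assumes es: "erg_setup U Ui \<Omega>" and m: "m > 0"
  shows "(\<lambda>N. cesaro (\<lambda>n. (U ^^ (n * m)) \<eta>) N) \<longlonglongrightarrow> cinner \<eta> \<Omega> *\<^sub>C \<Omega>"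
proof -
  have up: "unitary_pair U Ui" using es by (rule es_up)
  have U: "bounded_clinear U" using up by (rule up_U)
  have Uj: "bounded_clinear (U ^^ j)" for j using bclin_funpow[OF U] .
  define c where "c = cinner \<eta> \<Omega>"
  define \<eta>0 where "\<eta>0 = \<eta> - c *\<^sub>C \<Omega>"
  have o: "cinner \<eta>0 \<Omega> = 0" unfolding \<eta>0_def c_def by (rule orth_part[OF es])
  have dec: "(U ^^ (n * m)) \<eta> = c *\<^sub>C \<Omega> + (U ^^ (n * m)) \<eta>0" for n
  proof -
    have "\<eta> = c *\<^sub>C \<Omega> + \<eta>0" by (simp add: \<eta>0_def)
    then have "(U ^^ (n * m)) \<eta> = (U ^^ (n * m)) (c *\<^sub>C \<Omega>) + (U ^^ (n * m)) \<eta>0"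
      by (metis bclinD_add[OF Uj])
    also have "(U ^^ (n * m)) (c *\<^sub>C \<Omega>) = c *\<^sub>C \<Omega>"
      by (simp add: bclinD_scaleC[OF Uj] up_pow_fix[of U \<Omega>, OF es_fix[OF es]])
    finally show ?thesis .
  qed
  have v: "cesaro (\<lambda>n. (U ^^ (n * m)) \<eta>0) \<longlonglongrightarrow> 0"
  proof (rule vdc[where C="norm \<eta>0" and L="\<lambda>d. cinner ((U ^^ (d * m)) \<eta>0) \<eta>0"])
    show "norm ((U ^^ (n * m)) \<eta>0) \<le> norm \<eta>0" for n by (simp add: up_pow_norm[OF up])
    show "(\<lambda>N. cesaro (\<lambda>n. cinner ((U ^^ ((n + d) * m)) \<eta>0) ((U ^^ (n * m)) \<eta>0)) N)
        \<longlonglongrightarrow> cinner ((U ^^ (d * m)) \<eta>0) \<eta>0" for d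
    proof -
      have "cinner ((U ^^ ((n + d) * m)) \<eta>0) ((U ^^ (n * m)) \<eta>0) = cinner ((U ^^ (d * m)) \<eta>0) \<eta>0" for n
      proof -
        have "(U ^^ ((n + d) * m)) \<eta>0 = (U ^^ (n * m)) ((U ^^ (d * m)) \<eta>0)"
          by (simp add: add_mult_distrib funpow_add_apply)
        then show ?thesis by (simp add: up_pow_iso[OF up])
      qed
      then show ?thesis by (simp add: cesaro_const)
    qed
    show "(\<lambda>H. (\<Sum>d<H. cmod (cinner ((U ^^ (d * m)) \<eta>0) \<eta>0)) / real H) \<longlonglongrightarrow> 0"
      by (rule wm_sub[OF es m o])
  qed
  have "(\<lambda>N. cesaro (\<lambda>n. c *\<^sub>C \<Omega>) N + cesaro (\<lambda>n. (U ^^ (n * m)) \<eta>0) N) \<longlonglongrightarrow> c *\<^sub>C \<Omega> + 0"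
    by (intro tendsto_add cesaro_const v)
  then show ?thesis by (simp add: dec cesaro_add c_def)
qed



lemma cesaro_scaleC: "cesaro (\<lambda>n. c *\<^sub>C f n) N = c *\<^sub>C cesaro f N"
  by (simp add: cesaro_def scaleC_sum_right scaleC_scaleR_comm)

lemma tendsto_scaleC_const:
  fixes f :: "'b \<Rightarrow> 'a::complex_normed_vector"
  assumes "(f \<longlongrightarrow> a) F" shows "((\<lambda>x. c *\<^sub>C f x) \<longlongrightarrow> c *\<^sub>C a) F"
  using bclin_tendsto[OF bclin_scale_op[OF bclin_id, of c] assms] by simp

lemma cesaro_bclin: "bounded_clinear T \<Longrightarrow> cesaro (\<lambda>n. T (f n)) N = T (cesaro f N)"
  by (simp add: cesaro_def bclin_sum bclin_scaleR)

lemma cesaro_cinner_left: "cesaro (\<lambda>n. cinner (f n) v) N = cinner (cesaro f N) v"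
  by (simp add: cesaro_def cinner_scaleR_left cinner_sum_left scaleR_conv_of_real sum_distrib_left)

lemma adj_flip:
  assumes "\<forall>u v. cinner (X u) v = cinner u (X' v)"
  shows "cinner a (X b) = cinner (X' a) b"
proof -
  have "cinner a (X b) = cnj (cinner (X b) a)" by (rule cinner_commute)
  also have "\<dots> = cnj (cinner b (X' a))" using assms by simp
  also have "\<dots> = cinner (X' a) b" by (metis cinner_commute)
  finally show ?thesis .
qed

lemma core_vec:
  fixes U Ui :: "'h::complex_inner \<Rightarrow> 'h" and \<Omega> :: 'h and A X :: "'h \<Rightarrow> 'h" and D :: "('h \<Rightarrow> 'h) set"
  assumes es: "erg_setup U Ui \<Omega>"
    and m1: "0 < m1" and m12: "m1 < m2"
    and A: "bounded_clinear A"
    and D: "\<forall>W\<in>D. bounded_clinear W"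
    and Dadj: "\<forall>W\<in>D. \<exists>W'\<in>D. \<forall>u v. cinner (W u) v = cinner u (W' v)"
    and Dcomp: "\<forall>W\<in>D. \<forall>V\<in>D. W \<circ> V \<in> D"
    and Dconj: "\<forall>W\<in>D. \<forall>j. (U ^^ j) \<circ> W \<circ> (Ui ^^ j) \<in> D"
    and Dconj': "\<forall>W\<in>D. \<forall>j. (Ui ^^ j) \<circ> W \<circ> (U ^^ j) \<in> D"
    and Acomm: "\<forall>W\<in>D. A \<circ> W = W \<circ> A"
    and XD: "X \<in> D"
  shows "cesaro (\<lambda>n. (U ^^ (n * m1)) (A ((U ^^ (n * m2)) (X \<Omega>)))) \<longlonglongrightarrow> (cinner (A \<Omega>) \<Omega> * cinner (X \<Omega>) \<Omega>) *\<^sub>C \<Omega>"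
proof -
  have up: "unitary_pair U Ui" using es by (rule es_up)
  have Uj: "bounded_clinear (U ^^ j)" for j using bclin_funpow[OF up_U[OF up]] .
  have Uij: "bounded_clinear (Ui ^^ j)" for j using bclin_funpow[OF up_Ui[OF up]] .
  have fixU: "(U ^^ j) \<Omega> = \<Omega>" for j using up_pow_fix[of U \<Omega>, OF es_fix[OF es]] .
  have fixUi: "(Ui ^^ j) \<Omega> = \<Omega>" for j using up_powi_fix[OF up es_fix[OF es]] .
  have X: "bounded_clinear X" using D XD by blast
  obtain X' where X'D: "X' \<in> D" and X'adj: "\<forall>u v. cinner (X u) v = cinner u (X' v)"
    using Dadj XD by blast
  obtain KX where KX: "KX \<ge> 0" "\<And>x. norm (X x) \<le> norm x * KX" using bclin_bound[OF X] by blast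
  define k where "k = m1 + m2"
  have k: "k > 0" using m1 by (simp add: k_def)
  have m2: "m2 > 0" using m1 m12 by simp
  define c where "c = cinner (A \<Omega>) \<Omega>"
  define A' where "A' = (\<lambda>v. A v - c *\<^sub>C v)"
  define \<eta>0 where "\<eta>0 = A \<Omega> - c *\<^sub>C \<Omega>"
  have A'bl: "bounded_clinear A'" unfolding A'_def by (rule bclin_diff_op[OF A bclin_scale_op[OF bclin_id]])
  have o: "cinner \<eta>0 \<Omega> = 0" unfolding \<eta>0_def c_def by (rule orth_part[OF es])
  have Acomm': "A (W v) = W (A v)" if "W \<in> D" for W v
    using Acomm that by (metis comp_apply)
  have A'comm: "A' (W v) = W (A' v)" if "W \<in> D" for W v
  proof -
    have Wb: "bounded_clinear W" using D that by blast
    show ?thesis unfolding A'_def using Acomm'[OF that] by (simp add: bclin_diff[OF Wb] bclinD_scaleC[OF Wb])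
  qed
  have A'\<Omega>: "A' \<Omega> = \<eta>0" by (simp add: A'_def \<eta>0_def)
  have AO: "A \<Omega> = c *\<^sub>C \<Omega> + \<eta>0" by (simp add: \<eta>0_def)
  have conj_comm: "(U ^^ a) (A' ((Ui ^^ a) (W v))) = W ((U ^^ a) (A' ((Ui ^^ a) v)))" if WD: "W \<in> D" for W a v
  proof -
    define W' where "W' = (Ui ^^ a) \<circ> W \<circ> (U ^^ a)"
    have W'D: "W' \<in> D" using Dconj' WD by (simp add: W'_def)
    have "(Ui ^^ a) (W v) = W' ((Ui ^^ a) v)" by (simp add: W'_def up_pow_inv1[OF up])
    then have "(U ^^ a) (A' ((Ui ^^ a) (W v))) = (U ^^ a) (W' (A' ((Ui ^^ a) v)))" by (simp add: A'comm[OF W'D])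
    also have "\<dots> = W ((U ^^ a) (A' ((Ui ^^ a) v)))" by (simp add: W'_def up_pow_inv1[OF up])
    finally show ?thesis .
  qed
  define y where "y n = (U ^^ (n * k)) (X ((Ui ^^ (n * m2)) \<eta>0))" for n
  have dec: "(U ^^ (n * m1)) (A ((U ^^ (n * m2)) (X \<Omega>))) = c *\<^sub>C (U ^^ (n * k)) (X \<Omega>) + y n" for n
  proof -
    define j where "j = n * m2"
    define Xn where "Xn = (U ^^ j) \<circ> X \<circ> (Ui ^^ j)"
    have XnD: "Xn \<in> D" using Dconj XD by (simp add: Xn_def)
    have "(U ^^ j) (X \<Omega>) = Xn \<Omega>" by (simp add: Xn_def fixUi)
    then have "A ((U ^^ j) (X \<Omega>)) = Xn (A \<Omega>)" by (simp add: Acomm'[OF XnD])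
    also have "\<dots> = (U ^^ j) (X (c *\<^sub>C \<Omega> + (Ui ^^ j) \<eta>0))"
      by (simp add: Xn_def AO bclinD_add[OF Uij] bclinD_scaleC[OF Uij] fixUi)
    also have "\<dots> = c *\<^sub>C (U ^^ j) (X \<Omega>) + (U ^^ j) (X ((Ui ^^ j) \<eta>0))"
      by (simp add: bclinD_add[OF X] bclinD_scaleC[OF X] bclinD_add[OF Uj] bclinD_scaleC[OF Uj])
    finally have "(U ^^ (n * m1)) (A ((U ^^ j) (X \<Omega>))) =
        c *\<^sub>C (U ^^ (n * m1)) ((U ^^ j) (X \<Omega>)) + (U ^^ (n * m1)) ((U ^^ j) (X ((Ui ^^ j) \<eta>0)))"
      by (simp add: bclinD_add[OF Uj] bclinD_scaleC[OF Uj])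
    moreover have "(U ^^ (n * m1)) ((U ^^ j) v) = (U ^^ (n * k)) v" for v
      by (simp add: j_def k_def add_mult_distrib2 funpow_add_apply)
    ultimately show ?thesis by (simp add: y_def j_def)
  qed
  define Y where "Y d = (U ^^ (d * k)) \<circ> X \<circ> (Ui ^^ (d * k))" for d
  define Z where "Z d = X' \<circ> Y d" for d
  define A'' where "A'' d = (U ^^ (d * m1)) \<circ> A' \<circ> (Ui ^^ (d * m1))" for d
  define L where "L d = cinner (Z d \<Omega>) \<Omega> * cinner ((U ^^ (d * m1)) \<eta>0) \<eta>0" for d
  have YD: "Y d \<in> D" for d using Dconj XD by (simp add: Y_def)
  have ZD: "Z d \<in> D" for d using Dcomp X'D YD by (simp add: Z_def)
  have A''bl: "bounded_clinear (A'' d)" for d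
    unfolding A''_def by (intro bclin_comp Uj Uij A'bl)
  have A''comm: "A'' d (W v) = W (A'' d v)" if "W \<in> D" for W d v
    using conj_comm[OF that] by (simp add: A''_def)
  have A''\<Omega>: "A'' d \<Omega> = (U ^^ (d * m1)) \<eta>0" for d by (simp add: A''_def fixUi A'\<Omega>)
  have yinner: "cinner (y (n + d)) (y n) = cinner (A'' d ((U ^^ (n * m2)) (Z d \<Omega>))) \<eta>0" for n d
  proof -
    define j where "j = n * m2"
    define \<zeta> where "\<zeta> = (U ^^ (d * m1)) \<eta>0"
    define Zj where "Zj = (U ^^ j) \<circ> Z d \<circ> (Ui ^^ j)"
    have ZjD: "Zj \<in> D" using Dconj ZD by (simp add: Zj_def)
    have s1: "y (n + d) = (U ^^ (n * k)) ((U ^^ (d * k)) (X ((Ui ^^ j) ((Ui ^^ (d * m2)) \<eta>0))))"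
      by (simp add: y_def j_def add_mult_distrib funpow_add_apply)
    have s4: "(U ^^ (d * k)) (X w) = Y d ((U ^^ (d * k)) w)" for w
      by (simp add: Y_def up_pow_inv2[OF up])
    have s5: "(U ^^ (d * k)) ((Ui ^^ j) ((Ui ^^ (d * m2)) \<eta>0)) = (Ui ^^ j) \<zeta>"
    proof -
      have "(U ^^ (d * k)) ((Ui ^^ j) ((Ui ^^ (d * m2)) \<eta>0)) = (Ui ^^ j) ((U ^^ (d * k)) ((Ui ^^ (d * m2)) \<eta>0))"
        by (rule up_pow_comm[OF up])
      also have "(U ^^ (d * k)) ((Ui ^^ (d * m2)) \<eta>0) = (U ^^ (d * k - d * m2)) \<eta>0"
        by (rule up_pow_sub[OF up]) (simp add: k_def)
      also have "d * k - d * m2 = d * m1" by (simp add: k_def add_mult_distrib2)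
      finally show ?thesis by (simp add: \<zeta>_def)
    qed
    have "cinner (y (n + d)) (y n) = cinner ((U ^^ (d * k)) (X ((Ui ^^ j) ((Ui ^^ (d * m2)) \<eta>0)))) (X ((Ui ^^ j) \<eta>0))"
      unfolding s1 by (simp add: y_def j_def up_pow_iso[OF up])
    also have "\<dots> = cinner (Y d ((Ui ^^ j) \<zeta>)) (X ((Ui ^^ j) \<eta>0))"
      by (simp add: s4 s5)
    also have "\<dots> = cinner (Z d ((Ui ^^ j) \<zeta>)) ((Ui ^^ j) \<eta>0)"
      by (simp add: Z_def adj_flip[OF X'adj])
    also have "Z d ((Ui ^^ j) \<zeta>) = (Ui ^^ j) (Zj \<zeta>)"
      by (simp add: Zj_def up_pow_inv2[OF up])
    also have "cinner ((Ui ^^ j) (Zj \<zeta>)) ((Ui ^^ j) \<eta>0) = cinner (Zj \<zeta>) \<eta>0"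
      by (rule up_powi_iso[OF up])
    also have "Zj \<zeta> = A'' d (Zj \<Omega>)"
      using A''comm[OF ZjD, of d \<Omega>] by (simp add: A''\<Omega> \<zeta>_def)
    also have "Zj \<Omega> = (U ^^ j) (Z d \<Omega>)" by (simp add: Zj_def fixUi)
    finally show ?thesis by (simp add: j_def)
  qed
  have ylim: "cesaro y \<longlonglongrightarrow> 0"
  proof (rule vdc[where C="norm \<eta>0 * KX" and L=L])
    show "norm (y n) \<le> norm \<eta>0 * KX" for n
      using KX(2)[of "(Ui ^^ (n * m2)) \<eta>0"] by (simp add: y_def up_pow_norm[OF up] up_powi_norm[OF up])
    show "cesaro (\<lambda>n. cinner (y (n + d)) (y n)) \<longlonglongrightarrow> L d" for d
    proof -
      have "(\<lambda>N. cinner (A'' d (cesaro (\<lambda>n. (U ^^ (n * m2)) (Z d \<Omega>)) N)) \<eta>0)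
          \<longlonglongrightarrow> cinner (A'' d (cinner (Z d \<Omega>) \<Omega> *\<^sub>C \<Omega>)) \<eta>0"
        by (intro tendsto_cinner tendsto_const bclin_tendsto[OF A''bl] stepE[OF es m2])
      moreover have "cinner (A'' d (cinner (Z d \<Omega>) \<Omega> *\<^sub>C \<Omega>)) \<eta>0 = L d"
        by (simp add: L_def bclinD_scaleC[OF A''bl] cinner_scaleC_left A''\<Omega>)
      moreover have "cesaro (\<lambda>n. cinner (y (n + d)) (y n)) = (\<lambda>N. cinner (A'' d (cesaro (\<lambda>n. (U ^^ (n * m2)) (Z d \<Omega>)) N)) \<eta>0)"
        by (rule ext) (simp only: yinner cesaro_cinner_left cesaro_bclin[OF A''bl])
      ultimately show ?thesis by simp
    qed
    show "(\<lambda>H. (\<Sum>d<H. cmod (L d)) / real H) \<longlonglongrightarrow> 0"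
    proof (rule Lim_null_comparison[OF always_eventually[OF allI]])
      have w: "(\<lambda>H. (\<Sum>d<H. cmod (cinner ((U ^^ (d * m1)) \<eta>0) \<eta>0)) / real H) \<longlonglongrightarrow> 0"
        by (rule wm_sub[OF es m1 o])
      show "(\<lambda>H. (norm (X \<Omega>))\<^sup>2 * ((\<Sum>d<H. cmod (cinner ((U ^^ (d * m1)) \<eta>0) \<eta>0)) / real H)) \<longlonglongrightarrow> 0"
        using tendsto_mult[OF tendsto_const w, of "(norm (X \<Omega>))\<^sup>2"] by simp
      fix H
      have Lb: "cmod (L d) \<le> (norm (X \<Omega>))\<^sup>2 * cmod (cinner ((U ^^ (d * m1)) \<eta>0) \<eta>0)" for d
      proof -
        have "cinner (Z d \<Omega>) \<Omega> = cinner (Y d \<Omega>) (X \<Omega>)"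
          by (simp add: Z_def adj_flip[OF X'adj])
        also have "Y d \<Omega> = (U ^^ (d * k)) (X \<Omega>)" by (simp add: Y_def fixUi)
        finally have "cmod (cinner (Z d \<Omega>) \<Omega>) \<le> (norm (X \<Omega>))\<^sup>2"
          using cauchy_schwarz[of "(U ^^ (d * k)) (X \<Omega>)" "X \<Omega>"] by (simp add: up_pow_norm[OF up] power2_eq_square)
        then show ?thesis unfolding L_def norm_mult by (simp add: mult_right_mono)
      qed
      have "norm ((\<Sum>d<H. cmod (L d)) / real H) = (\<Sum>d<H. cmod (L d)) / real H"
        by (simp add: sum_nonneg)
      also have "\<dots> \<le> (\<Sum>d<H. (norm (X \<Omega>))\<^sup>2 * cmod (cinner ((U ^^ (d * m1)) \<eta>0) \<eta>0)) / real H"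
        by (intro divide_right_mono sum_mono Lb) simp
      also have "\<dots> = (norm (X \<Omega>))\<^sup>2 * ((\<Sum>d<H. cmod (cinner ((U ^^ (d * m1)) \<eta>0) \<eta>0)) / real H)"
        by (simp add: sum_distrib_left)
      finally show "norm ((\<Sum>d<H. cmod (L d)) / real H) \<le> (norm (X \<Omega>))\<^sup>2 * ((\<Sum>d<H. cmod (cinner ((U ^^ (d * m1)) \<eta>0) \<eta>0)) / real H)" .
    qed
  qed
  have "(\<lambda>N. c *\<^sub>C cesaro (\<lambda>n. (U ^^ (n * k)) (X \<Omega>)) N + cesaro y N) \<longlonglongrightarrow> c *\<^sub>C (cinner (X \<Omega>) \<Omega> *\<^sub>C \<Omega>) + 0"
    by (intro tendsto_add tendsto_scaleC_const stepE[OF es k] ylim)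
  moreover have "cesaro (\<lambda>n. (U ^^ (n * m1)) (A ((U ^^ (n * m2)) (X \<Omega>)))) =
      (\<lambda>N. c *\<^sub>C cesaro (\<lambda>n. (U ^^ (n * k)) (X \<Omega>)) N + cesaro y N)"
    by (rule ext) (simp add: dec cesaro_add cesaro_scaleC)
  ultimately show ?thesis by (simp add: scaleC_scaleC c_def)
qed


lemma core:
  fixes U Ui :: "'h::complex_inner \<Rightarrow> 'h" and \<Omega> :: 'h and A :: "'h \<Rightarrow> 'h" and D :: "('h \<Rightarrow> 'h) set"
  assumes es: "erg_setup U Ui \<Omega>"
    and m1: "0 < m1" and m12: "m1 < m2"
    and A: "bounded_clinear A"
    and D: "\<forall>W\<in>D. bounded_clinear W"
    and Dadj: "\<forall>W\<in>D. \<exists>W'\<in>D. \<forall>u v. cinner (W u) v = cinner u (W' v)"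
    and Dcomp: "\<forall>W\<in>D. \<forall>V\<in>D. W \<circ> V \<in> D"
    and Dconj: "\<forall>W\<in>D. \<forall>j. (U ^^ j) \<circ> W \<circ> (Ui ^^ j) \<in> D"
    and Dconj': "\<forall>W\<in>D. \<forall>j. (Ui ^^ j) \<circ> W \<circ> (U ^^ j) \<in> D"
    and Acomm: "\<forall>W\<in>D. A \<circ> W = W \<circ> A"
    and dense: "closure ((\<lambda>W. W \<Omega>) ` D) = UNIV"
  shows "\<forall>\<xi>. (\<lambda>N. complex_of_real (1 / real N) *\<^sub>C
                  (\<Sum>n<N. (U ^^ (n * m1)) (A ((U ^^ (n * m2)) \<xi>))))
             \<longlonglongrightarrow> (cinner (A \<Omega>) \<Omega> * cinner \<xi> \<Omega>) *\<^sub>C \<Omega>"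
proof
  fix \<xi> :: 'h
  have up: "unitary_pair U Ui" using es by (rule es_up)
  have Uj: "bounded_clinear (U ^^ j)" for j using bclin_funpow[OF up_U[OF up]] .
  define c where "c = cinner (A \<Omega>) \<Omega>"
  define S where "S w N = cesaro (\<lambda>n. (U ^^ (n * m1)) (A ((U ^^ (n * m2)) w))) N" for w N
  define R where "R w = (c * cinner w \<Omega>) *\<^sub>C \<Omega>" for w
  obtain KA where KA: "KA \<ge> 0" "\<And>x. norm (A x) \<le> norm x * KA" using bclin_bound[OF A] by blast
  have conv: "(\<lambda>N. complex_of_real (1 / real N) *\<^sub>C (\<Sum>n<N. (U ^^ (n * m1)) (A ((U ^^ (n * m2)) \<xi>)))) = S \<xi>"
    by (rule ext) (simp only: S_def cesaro_def scaleC_of_real)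
  have Sdiff: "S a N - S b N = S (a - b) N" for a b N
    by (simp add: S_def cesaro_diff[symmetric] bclin_diff[OF Uj] bclin_diff[OF A])
  have Sbound: "norm (S w N) \<le> norm w * KA" for w N
    unfolding S_def
  proof (rule cesaro_le_bound)
    fix n
    have "norm ((U ^^ (n * m1)) (A ((U ^^ (n * m2)) w))) = norm (A ((U ^^ (n * m2)) w))"
      by (rule up_pow_norm[OF up])
    also have "\<dots> \<le> norm ((U ^^ (n * m2)) w) * KA" by (rule KA(2))
    also have "\<dots> = norm w * KA" by (simp add: up_pow_norm[OF up])
    finally show "norm ((U ^^ (n * m1)) (A ((U ^^ (n * m2)) w))) \<le> norm w * KA" .
  qed
  have Rdiff: "R a - R b = R (a - b)" for a b
    by (simp add: R_def cinner_diff_left right_diff_distrib scaleC_diff_left)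
  have Rbound: "norm (R w) \<le> cmod c * norm w" for w
  proof -
    have "norm (R w) = cmod c * cmod (cinner w \<Omega>)"
      by (simp add: R_def norm_scaleC norm_mult es_norm[OF es])
    also have "\<dots> \<le> cmod c * norm w"
      using cauchy_schwarz[of w \<Omega>] by (simp add: es_norm[OF es] mult_left_mono)
    finally show ?thesis .
  qed
  have "(\<lambda>N. norm (S \<xi> N - R \<xi>)) \<longlonglongrightarrow> 0"
  proof (rule approx_zero)
    fix e :: real assume e: "e > 0"
    define \<delta> where "\<delta> = e / (KA + cmod c + 1)"
    have pos: "KA + cmod c + 1 > 0" using KA(1) norm_ge_zero[of c] by linarith
    have \<delta>: "\<delta> > 0" using e pos by (simp add: \<delta>_def)
    have \<delta>e: "(KA + cmod c) * \<delta> \<le> e"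
    proof -
      have "(KA + cmod c) * \<delta> \<le> (KA + cmod c + 1) * \<delta>" using \<delta> by simp
      also have "\<dots> = e" using pos by (simp add: \<delta>_def)
      finally show ?thesis .
    qed
    have xc: "\<xi> \<in> closure ((\<lambda>W. W \<Omega>) ` D)" using dense by simp
    have "\<exists>y\<in>(\<lambda>W. W \<Omega>) ` D. dist y \<xi> < \<delta>"
      using closure_approachable[THEN iffD1, OF xc, rule_format, OF \<delta>] .
    then obtain X where XD: "X \<in> D" and d: "dist (X \<Omega>) \<xi> < \<delta>" by (auto simp: image_iff)
    define \<xi>' where "\<xi>' = X \<Omega>"
    have \<xi>': "\<xi>' = X \<Omega>" by (simp add: \<xi>'_def)
    have d: "dist \<xi>' \<xi> < \<delta>" using d by (simp add: \<xi>'_def)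
    have Seq: "S w = cesaro (\<lambda>n. (U ^^ (n * m1)) (A ((U ^^ (n * m2)) w)))" for w
      by (rule ext) (simp add: S_def)
    have lim': "S \<xi>' \<longlonglongrightarrow> R \<xi>'"
      using core_vec[OF es m1 m12 A D Dadj Dcomp Dconj Dconj' Acomm XD]
      by (simp add: Seq R_def c_def \<xi>')
    show "\<exists>b B. b \<longlonglongrightarrow> B \<and> B \<le> e \<and> (\<forall>N. norm (S \<xi> N - R \<xi>) \<le> b N)"
    proof (intro exI conjI allI)
      show "(\<lambda>N. norm (S \<xi>' N - R \<xi>') + (KA + cmod c) * \<delta>) \<longlonglongrightarrow> 0 + (KA + cmod c) * \<delta>"
        by (intro tendsto_add tendsto_const tendsto_norm_zero LIM_zero lim')
      show "0 + (KA + cmod c) * \<delta> \<le> e" using \<delta>e by simp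
      fix N
      have eq: "S \<xi> N - R \<xi> = (S \<xi>' N - R \<xi>') + (S (\<xi> - \<xi>') N - R (\<xi> - \<xi>'))"
        by (simp add: Sdiff[symmetric] Rdiff[symmetric])
      have t1: "norm (S \<xi> N - R \<xi>) \<le> norm (S \<xi>' N - R \<xi>') + norm (S (\<xi> - \<xi>') N - R (\<xi> - \<xi>'))"
        unfolding eq by (rule norm_triangle_ineq)
      have t2: "norm (S (\<xi> - \<xi>') N - R (\<xi> - \<xi>')) \<le> norm (S (\<xi> - \<xi>') N) + norm (R (\<xi> - \<xi>'))"
        by (rule norm_triangle_ineq4)
      have "norm (S \<xi> N - R \<xi>) \<le> norm (S \<xi>' N - R \<xi>') + (norm (S (\<xi> - \<xi>') N) + norm (R (\<xi> - \<xi>')))"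
        using t1 t2 by linarith
      also have "norm (S (\<xi> - \<xi>') N) + norm (R (\<xi> - \<xi>')) \<le> norm (\<xi> - \<xi>') * KA + cmod c * norm (\<xi> - \<xi>')"
        by (intro add_mono Sbound Rbound)
      also have "\<dots> = (KA + cmod c) * norm (\<xi> - \<xi>')" by (simp add: algebra_simps)
      also have "\<dots> \<le> (KA + cmod c) * \<delta>"
      proof (rule mult_left_mono)
        have "norm (\<xi> - \<xi>') = dist \<xi>' \<xi>" unfolding dist_norm by (rule norm_minus_commute)
        then show "norm (\<xi> - \<xi>') \<le> \<delta>" using d by linarith
        show "0 \<le> KA + cmod c" using KA(1) by simp
      qed
      finally show "norm (S \<xi> N - R \<xi>) \<le> norm (S \<xi>' N - R \<xi>') + (KA + cmod c) * \<delta>" by simp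
    qed
  qed simp
  then have "S \<xi> \<longlonglongrightarrow> R \<xi>"
    by (rule LIM_zero_cancel[OF tendsto_norm_zero_cancel])
  then show "(\<lambda>N. complex_of_real (1 / real N) *\<^sub>C (\<Sum>n<N. (U ^^ (n * m1)) (A ((U ^^ (n * m2)) \<xi>))))
             \<longlonglongrightarrow> (cinner (A \<Omega>) \<Omega> * cinner \<xi> \<Omega>) *\<^sub>C \<Omega>"
    unfolding conv by (simp add: R_def c_def)
qed



section \<open>Projection theorem, Riesz representation, adjoints\<close>

definition csubspace :: "'a::complex_vector set \<Rightarrow> bool" where
  "csubspace K \<longleftrightarrow> 0 \<in> K \<and> (\<forall>a\<in>K. \<forall>b\<in>K. a + b \<in> K) \<and> (\<forall>c. \<forall>a\<in>K. c *\<^sub>C a \<in> K)"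

lemma csub_0: "csubspace K \<Longrightarrow> 0 \<in> K" by (simp add: csubspace_def)
lemma csub_add: "csubspace K \<Longrightarrow> a \<in> K \<Longrightarrow> b \<in> K \<Longrightarrow> a + b \<in> K" by (simp add: csubspace_def)
lemma csub_scaleC: "csubspace K \<Longrightarrow> a \<in> K \<Longrightarrow> c *\<^sub>C a \<in> K" by (simp add: csubspace_def)
lemma csub_scaleR: "csubspace K \<Longrightarrow> a \<in> K \<Longrightarrow> r *\<^sub>R a \<in> K"
  by (simp add: csubspace_def scaleR_scaleC)
lemma csub_minus: "csubspace K \<Longrightarrow> a \<in> K \<Longrightarrow> - a \<in> K"
  using csub_scaleC[of K a "-1"] by (simp add: scaleC_minus_left)
lemma csub_diff: "csubspace K \<Longrightarrow> a \<in> K \<Longrightarrow> b \<in> K \<Longrightarrow> a - b \<in> K"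
  using csub_add[of K a "- b"] csub_minus[of K b] by simp

lemma parallelogram:
  "(norm (u - v::'a::complex_inner))\<^sup>2 + (norm (u + v))\<^sup>2 = 2 * (norm u)\<^sup>2 + 2 * (norm v)\<^sup>2"
  by (simp add: norm_add_sq norm_diff_sq)

lemma proj_exists:
  fixes K :: "'a::chilbert_space set" and x :: 'a
  assumes cl: "closed K" and sub: "csubspace K"
  shows "\<exists>p\<in>K. \<forall>k\<in>K. cinner (x - p) k = 0"
proof -
  define Q where "Q = (\<lambda>k. (norm (x - k))\<^sup>2) ` K"
  define d where "d = Inf Q"
  have Qne: "Q \<noteq> {}" using csub_0[OF sub] by (auto simp: Q_def)
  have Qbdd: "bdd_below Q" unfolding bdd_below_def Q_def by (rule exI[of _ 0]) simp
  have dle: "d \<le> (norm (x - k))\<^sup>2" if "k \<in> K" for k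
    unfolding d_def using that Qbdd by (auto simp: Q_def intro: cInf_lower)
  have "\<exists>k\<in>K. (norm (x - k))\<^sup>2 < d + 1 / (real n + 1)" for n
  proof -
    have "Inf Q < d + 1 / (real n + 1)" by (simp add: d_def)
    then obtain q where "q \<in> Q" "q < d + 1 / (real n + 1)" using cInf_lessD[OF Qne] by blast
    then show ?thesis by (auto simp: Q_def)
  qed
  then obtain kk where kkK: "\<And>n. kk n \<in> K" and kkd: "\<And>n. (norm (x - kk n))\<^sup>2 < d + 1 / (real n + 1)"
    by metis
  have par: "(norm (a - b))\<^sup>2 \<le> 2 * (norm (x - a))\<^sup>2 + 2 * (norm (x - b))\<^sup>2 - 4 * d" if "a \<in> K" "b \<in> K" for a b
  proof -
    have mK: "(1/2::real) *\<^sub>R (a + b) \<in> K" using that sub by (simp add: csub_add csub_scaleR)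
    have e1: "(x - a) - (x - b) = b - a" by simp
    have e2: "(x - a) + (x - b) = 2 *\<^sub>R (x - (1/2::real) *\<^sub>R (a + b))"
      by (simp add: algebra_simps scaleR_2)
    have "(norm (b - a))\<^sup>2 + (norm (2 *\<^sub>R (x - (1/2::real) *\<^sub>R (a + b))))\<^sup>2 = 2 * (norm (x - a))\<^sup>2 + 2 * (norm (x - b))\<^sup>2"
      using parallelogram[of "x - a" "x - b"] by (simp only: e1 e2)
    moreover have "(norm (2 *\<^sub>R (x - (1/2::real) *\<^sub>R (a + b))))\<^sup>2 = 4 * (norm (x - (1/2::real) *\<^sub>R (a + b)))\<^sup>2"
      by (simp add: power2_eq_square)
    moreover have "d \<le> (norm (x - (1/2::real) *\<^sub>R (a + b)))\<^sup>2" by (rule dle[OF mK])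
    ultimately show ?thesis by (simp add: norm_minus_commute)
  qed
  have cau: "Cauchy kk"
  proof (rule CauchyI)
    fix e :: real assume e: "e > 0"
    obtain M where M: "4 / (real M + 1) < e\<^sup>2"
    proof -
      obtain M :: nat where "4 / e\<^sup>2 < real M" using reals_Archimedean2 by blast
      then have "4 / (real M + 1) < e\<^sup>2" using e by (simp add: field_simps) (smt (verit) mult_pos_pos zero_less_power)
      then show ?thesis using that by blast
    qed
    show "\<exists>M. \<forall>m\<ge>M. \<forall>n\<ge>M. norm (kk m - kk n) < e"
    proof (intro exI allI impI)
      fix m n assume mM: "m \<ge> M" and nM: "n \<ge> M"
      have "(norm (kk m - kk n))\<^sup>2 \<le> 2 * (norm (x - kk m))\<^sup>2 + 2 * (norm (x - kk n))\<^sup>2 - 4 * d"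
        by (rule par[OF kkK kkK])
      also have "\<dots> \<le> 2 * (1 / (real m + 1)) + 2 * (1 / (real n + 1))"
        using kkd[of m] kkd[of n] by simp
      also have "\<dots> \<le> 2 * (1 / (real M + 1)) + 2 * (1 / (real M + 1))"
        using mM nM by (intro add_mono mult_left_mono divide_left_mono) auto
      also have "\<dots> < e\<^sup>2" using M by simp
      finally have "(norm (kk m - kk n))\<^sup>2 < e\<^sup>2" .
      then show "norm (kk m - kk n) < e" using e by (simp add: power_less_imp_less_base)
    qed
  qed
  then obtain p where lim: "kk \<longlonglongrightarrow> p" using Cauchy_convergent convergent_def by blast
  have pK: "p \<in> K" by (rule closed_sequentially[OF cl kkK lim])
  have limn: "(\<lambda>n. (norm (x - kk n))\<^sup>2) \<longlonglongrightarrow> (norm (x - p))\<^sup>2"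
    by (intro tendsto_intros lim)
  have dp: "(norm (x - p))\<^sup>2 \<le> d"
  proof (rule tendsto_le[OF sequentially_bot _ limn])
    show "(\<lambda>n. d + 1 / (real n + 1)) \<longlonglongrightarrow> d"
      using tendsto_add[OF tendsto_const LIMSEQ_inverse_real_of_nat, of d] by (simp add: inverse_eq_divide add.commute)
    show "\<forall>\<^sub>F n in sequentially. (norm (x - kk n))\<^sup>2 \<le> d + 1 / (real n + 1)"
      using kkd less_imp_le by (intro always_eventually) blast
  qed
  show ?thesis
  proof (intro bexI[OF _ pK] ballI)
    fix k assume kK: "k \<in> K"
    define w where "w = x - p"
    define a where "a = cinner w k"
    show "cinner (x - p) k = 0"
    proof (cases "k = 0")
      case True then show ?thesis by simp
    next
      case False
      define n where "n = (norm k)\<^sup>2"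
      have n: "n > 0" using False by (simp add: n_def)
      define t where "t = a / complex_of_real n"
      have ptK: "p + t *\<^sub>C k \<in> K" using sub pK kK by (simp add: csub_add csub_scaleC)
      have "x - (p + t *\<^sub>C k) = w - t *\<^sub>C k" by (simp add: w_def)
      then have "(norm w)\<^sup>2 \<le> (norm (w - t *\<^sub>C k))\<^sup>2"
        using dp dle[OF ptK] unfolding w_def by (metis order_trans)
      also have "(norm (w - t *\<^sub>C k))\<^sup>2 = (norm w)\<^sup>2 + (norm (t *\<^sub>C k))\<^sup>2 - 2 * Re (cinner w (t *\<^sub>C k))"
        by (rule norm_diff_sq)
      also have "(norm (t *\<^sub>C k))\<^sup>2 = (cmod a)\<^sup>2 / n"
      proof -
        have ct: "cmod t = cmod a / n" using n by (simp add: t_def norm_divide)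
        have "(norm (t *\<^sub>C k))\<^sup>2 = (cmod t)\<^sup>2 * n" by (simp add: norm_scaleC power_mult_distrib n_def)
        also have "\<dots> = (cmod a)\<^sup>2 / n" using n unfolding ct by (simp add: power2_eq_square field_simps)
        finally show ?thesis .
      qed
      also have "Re (cinner w (t *\<^sub>C k)) = (cmod a)\<^sup>2 / n"
        using n by (simp add: cinner_scaleC_right t_def a_def[symmetric] complex_mult_cnj cmod_power2 mult.commute)
      finally have "(cmod a)\<^sup>2 / n \<le> 0" by simp
      then have "(cmod a)\<^sup>2 \<le> 0" using n by (simp add: divide_le_0_iff)
      then have "a = 0" by simp
      then show ?thesis by (simp add: a_def w_def)
    qed
  qed
qed


definition proj :: "'a::chilbert_space set \<Rightarrow> 'a \<Rightarrow> 'a" where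
  "proj K x = (SOME p. p \<in> K \<and> (\<forall>k\<in>K. cinner (x - p) k = 0))"

lemma proj_prop:
  assumes "closed K" "csubspace K"
  shows "proj K x \<in> K \<and> (\<forall>k\<in>K. cinner (x - proj K x) k = 0)"
  unfolding proj_def by (rule someI_ex) (use proj_exists[OF assms, of x] in blast)

lemma proj_unique:
  assumes "csubspace K" "p \<in> K" "\<forall>k\<in>K. cinner (x - p) k = 0" "q \<in> K" "\<forall>k\<in>K. cinner (x - q) k = 0"
  shows "p = q"
proof -
  have pq: "p - q \<in> K" using assms by (simp add: csub_diff)
  have "cinner (p - q) (p - q) = cinner ((x - q) - (x - p)) (p - q)" by simp
  also have "\<dots> = 0" using assms(3,5) pq by (simp add: cinner_diff_left)
  finally show ?thesis by (simp add: cinner_eq_zero_self)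
qed

lemma proj_eqI:
  assumes "closed K" "csubspace K" "p \<in> K" "\<forall>k\<in>K. cinner (x - p) k = 0"
  shows "proj K x = p"
  using proj_unique[OF assms(2) _ _ assms(3,4)] proj_prop[OF assms(1,2)] by blast

lemma proj_bclin:
  assumes cl: "closed K" and sub: "csubspace K"
  shows "bounded_clinear (proj K)"
proof (rule bclin_intro[where K=1])
  note P = proj_prop[OF cl sub]
  fix x y :: 'a and c :: complex
  show "proj K (x + y) = proj K x + proj K y"
  proof (rule proj_eqI[OF cl sub])
    show "proj K x + proj K y \<in> K" using P sub by (simp add: csub_add)
    show "\<forall>k\<in>K. cinner (x + y - (proj K x + proj K y)) k = 0"
    proof
      fix k assume "k \<in> K"
      have e: "x + y - (proj K x + proj K y) = (x - proj K x) + (y - proj K y)" by simp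
      have "cinner (x - proj K x) k = 0" "cinner (y - proj K y) k = 0" using P \<open>k \<in> K\<close> by blast+
      then show "cinner (x + y - (proj K x + proj K y)) k = 0" unfolding e cinner_add_left by simp
    qed
  qed
  show "proj K (c *\<^sub>C x) = c *\<^sub>C proj K x"
  proof (rule proj_eqI[OF cl sub])
    have px: "proj K x \<in> K" and ox: "\<forall>k\<in>K. cinner (x - proj K x) k = 0" using P[of x] by blast+
    show "c *\<^sub>C proj K x \<in> K" using px sub by (rule csub_scaleC[rotated])
    show "\<forall>k\<in>K. cinner (c *\<^sub>C x - c *\<^sub>C proj K x) k = 0"
    proof
      fix k assume "k \<in> K"
      have "cinner (c *\<^sub>C x - c *\<^sub>C proj K x) k = c * cinner (x - proj K x) k"
        by (simp only: scaleC_diff_right[symmetric] cinner_scaleC_left)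
      then show "cinner (c *\<^sub>C x - c *\<^sub>C proj K x) k = 0" using ox \<open>k \<in> K\<close> by simp
    qed
  qed
  show "norm (proj K x) \<le> norm x * 1"
  proof -
    have px: "proj K x \<in> K" and ox: "\<forall>k\<in>K. cinner (x - proj K x) k = 0" using P[of x] by blast+
    have "cinner (x - proj K x) (proj K x) = 0" using ox px by blast
    then have "cinner (proj K x) (x - proj K x) = 0"
      by (subst cinner_commute) simp
    moreover have "proj K x + (x - proj K x) = x" by simp
    ultimately have "(norm x)\<^sup>2 = (norm (proj K x))\<^sup>2 + (norm (x - proj K x))\<^sup>2"
      using norm_add_sq[of "proj K x" "x - proj K x"] by simp
    then have "(norm (proj K x))\<^sup>2 \<le> (norm x)\<^sup>2" by simp
    then have "norm (proj K x) \<le> norm x" by (rule power2_le_imp_le) simp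
    then show ?thesis by simp
  qed
qed

lemma closure_csubspace:
  fixes S :: "'a::complex_normed_vector set"
  assumes sub: "csubspace S"
  shows "csubspace (closure S)"
proof -
  have addc: "a + b \<in> closure S" if a: "a \<in> closure S" and b: "b \<in> closure S" for a b
  proof -
    have "s + b \<in> closure S" if s: "s \<in> S" for s
    proof -
      have "(\<lambda>y. s + y) ` S \<subseteq> closure S"
        using csub_add[OF sub s] closure_subset by blast
      then have "(\<lambda>y. s + y) ` closure S \<subseteq> closure S"
        by (intro image_closure_subset) (auto intro!: continuous_intros)
      then show ?thesis using b by blast
    qed
    then have "(\<lambda>x. x + b) ` closure S \<subseteq> closure S"
      by (intro image_closure_subset) (auto intro!: continuous_intros)
    then show ?thesis using a by blast
  qed
  have scc: "c *\<^sub>C a \<in> closure S" if a: "a \<in> closure S" for a c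
  proof -
    have "(\<lambda>x. c *\<^sub>C x) ` closure S \<subseteq> closure S"
    proof (rule image_closure_subset)
      show "continuous_on (closure S) (\<lambda>x. c *\<^sub>C x)" by (rule bclin_continuous_on[OF bclin_scale_op[OF bclin_id]])
      show "(\<lambda>x. c *\<^sub>C x) ` S \<subseteq> closure S" using csub_scaleC[OF sub] closure_subset by blast
    qed simp
    then show ?thesis using a by blast
  qed
  show ?thesis unfolding csubspace_def
    using addc scc csub_0[OF sub] closure_subset by blast
qed

lemma vector_eqI_cinner_right: "(\<And>z. cinner z (x::'a::complex_inner) = cinner z y) \<Longrightarrow> x = y"
  by (rule vector_eqI_cinner) (metis cinner_commute)

lemma riesz:
  fixes f :: "'a::chilbert_space \<Rightarrow> complex"
  assumes add: "\<And>x y. f (x + y) = f x + f y" and sc: "\<And>c x. f (c *\<^sub>C x) = c * f x"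
    and bd: "\<And>x. cmod (f x) \<le> norm x * K"
  shows "\<exists>z. \<forall>x. f x = cinner x z"
proof (cases "\<forall>x. f x = 0")
  case True then show ?thesis by (intro exI[of _ 0]) simp
next
  case False
  then obtain x0 where x0: "f x0 \<noteq> 0" by blast
  have bl: "bounded_linear f"
  proof (rule bounded_linear_intro[where K=K])
    show "f (x + y) = f x + f y" for x y by (rule add)
    show "f (r *\<^sub>R x) = r *\<^sub>R f x" for r x using sc[of "complex_of_real r" x] by (simp add: scaleR_scaleC scaleR_conv_of_real)
    show "norm (f x) \<le> norm x * K" for x using bd by simp
  qed
  define N0 where "N0 = {x. f x = 0}"
  have f0: "f 0 = 0" using linear_simps(3)[OF bl] .
  have fdiff: "f (a - b) = f a - f b" for a b using linear_simps(2)[OF bl] .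
  have cl: "closed N0" unfolding N0_def
    by (rule closed_Collect_eq) (auto intro: linear_continuous_on[OF bl] continuous_intros)
  have sub: "csubspace N0" unfolding csubspace_def N0_def by (simp add: f0 add sc)
  define p where "p = proj N0 x0"
  define w where "w = x0 - p"
  have P: "p \<in> N0" "\<forall>k\<in>N0. cinner w k = 0" using proj_prop[OF cl sub, of x0] by (simp_all add: p_def w_def)
  have fw: "f w = f x0" using P(1) by (simp add: w_def fdiff N0_def)
  have w0: "w \<noteq> 0" using fw x0 f0 by auto
  define n where "n = (norm w)\<^sup>2"
  have n: "n > 0" using w0 by (simp add: n_def)
  have ww: "cinner w w = of_real n" by (simp add: n_def cinner_self_norm del: of_real_power)
  define z where "z = (cnj (f w) / of_real n) *\<^sub>C w"
  show ?thesis
  proof (intro exI allI)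
    fix x
    define v where "v = x - (f x / f w) *\<^sub>C w"
    have "f v = 0" using fw x0 by (simp add: v_def fdiff sc)
    then have "cinner w v = 0" using P(2) by (simp add: N0_def)
    then have "cinner v w = 0" by (metis cinner_commute complex_cnj_zero)
    then have xw: "cinner x w = (f x / f w) * of_real n"
      by (simp add: v_def cinner_diff_left cinner_scaleC_left ww)
    have "cinner x z = (f w / of_real n) * cinner x w"
      by (simp add: z_def cinner_scaleC_right)
    also have "\<dots> = f x" using n fw x0 by (simp add: xw)
    finally show "f x = cinner x z" by simp
  qed
qed

definition adj :: "('a::chilbert_space \<Rightarrow> 'a) \<Rightarrow> 'a \<Rightarrow> 'a" where
  "adj T v = (SOME z. \<forall>x. cinner (T x) v = cinner x z)"

lemma adj_prop:
  assumes T: "bounded_clinear T"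
  shows "cinner (T x) v = cinner x (adj T v)"
proof -
  obtain K where K: "K \<ge> 0" "\<And>x. norm (T x) \<le> norm x * K" using bclin_bound[OF T] by blast
  have "\<exists>z. \<forall>x. cinner (T x) v = cinner x z"
  proof (rule riesz[where K="K * norm v"])
    show "cinner (T (x + y)) v = cinner (T x) v + cinner (T y) v" for x y by (simp add: bclinD_add[OF T] cinner_add_left)
    show "cinner (T (c *\<^sub>C x)) v = c * cinner (T x) v" for c x by (simp add: bclinD_scaleC[OF T] cinner_scaleC_left)
    show "cmod (cinner (T x) v) \<le> norm x * (K * norm v)" for x
      using cauchy_schwarz[of "T x" v] K(2)[of x] by (smt (verit) mult.assoc mult_right_mono norm_ge_zero)
  qed
  then show ?thesis unfolding adj_def by (rule someI_ex[where P="\<lambda>z. \<forall>x. cinner (T x) v = cinner x z", THEN spec])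
qed

lemma adj_bclin:
  assumes T: "bounded_clinear T"
  shows "bounded_clinear (adj T)"
proof -
  obtain K where K: "K \<ge> 0" "\<And>x. norm (T x) \<le> norm x * K" using bclin_bound[OF T] by blast
  show ?thesis
  proof (rule bclin_intro[where K=K])
    fix x y :: 'a and c :: complex
    show "adj T (x + y) = adj T x + adj T y"
      by (rule vector_eqI_cinner_right) (simp add: adj_prop[OF T, symmetric] cinner_add_right)
    show "adj T (c *\<^sub>C x) = c *\<^sub>C adj T x"
      by (rule vector_eqI_cinner_right) (simp add: adj_prop[OF T, symmetric] cinner_scaleC_right)
    show "norm (adj T x) \<le> norm x * K"
    proof -
      have "(norm (adj T x))\<^sup>2 = cmod (cinner (adj T x) (adj T x))"
        by (simp add: cinner_self_norm del: of_real_power)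
      also have "cinner (adj T x) (adj T x) = cinner (T (adj T x)) x"
        by (metis adj_prop[OF T] cinner_commute)
      also have "cmod \<dots> \<le> norm (T (adj T x)) * norm x" by (rule cauchy_schwarz)
      also have "\<dots> \<le> norm (adj T x) * K * norm x" by (intro mult_right_mono K(2)) simp
      finally have h: "(norm (adj T x))\<^sup>2 \<le> norm (adj T x) * (norm x * K)" by (simp add: mult_ac)
      show ?thesis
      proof (cases "norm (adj T x) = 0")
        case True then show ?thesis using K by simp
      next
        case False
        then have "norm (adj T x) > 0" by simp
        then show ?thesis using h by (simp add: power2_eq_square)
      qed
    qed
  qed
qed

lemma adj_flip': "bounded_clinear T \<Longrightarrow> cinner (adj T a) b = cinner a (T b)"
  by (metis adj_prop cinner_commute)



section \<open>Commutants\<close>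

lemma commutantI: "bounded_clinear T \<Longrightarrow> (\<And>X. X \<in> S \<Longrightarrow> T \<circ> X = X \<circ> T) \<Longrightarrow> T \<in> commutant S"
  by (simp add: commutant_def)

lemma commutantD1: "T \<in> commutant S \<Longrightarrow> bounded_clinear T"
  by (simp add: commutant_def)

lemma commutantD2: "T \<in> commutant S \<Longrightarrow> X \<in> S \<Longrightarrow> T (X v) = X (T v)"
  unfolding commutant_def by (metis (mono_tags, lifting) comp_apply mem_Collect_eq)

lemma commutant_antimono: "S \<subseteq> T \<Longrightarrow> commutant T \<subseteq> commutant S"
  unfolding commutant_def by blast

lemma subset_bicommutant: "(\<forall>X\<in>S. bounded_clinear X) \<Longrightarrow> S \<subseteq> commutant (commutant S)"
  unfolding commutant_def by auto

lemma commutant_comp: "T \<in> commutant S \<Longrightarrow> V \<in> commutant S \<Longrightarrow> T \<circ> V \<in> commutant S"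
  by (rule commutantI) (auto simp: bclin_comp commutantD1 commutantD2 fun_eq_iff)

lemma commutant_id: "(\<lambda>x. x) \<in> commutant S"
  by (rule commutantI[OF bclin_id]) auto

lemma commutant_zero: "(\<forall>X\<in>S. bounded_clinear X) \<Longrightarrow> (\<lambda>x. 0) \<in> commutant S"
  by (rule commutantI[OF bclin_intro[where K=0]]) (auto simp: fun_eq_iff)

lemma commutant_add: "(\<forall>X\<in>S. bounded_clinear X) \<Longrightarrow> T \<in> commutant S \<Longrightarrow> V \<in> commutant S \<Longrightarrow> (\<lambda>x. T x + V x) \<in> commutant S"
  by (rule commutantI) (auto simp: bclin_add_op commutantD1 commutantD2 fun_eq_iff bclinD_add)

lemma commutant_scale: "(\<forall>X\<in>S. bounded_clinear X) \<Longrightarrow> T \<in> commutant S \<Longrightarrow> (\<lambda>x. c *\<^sub>C T x) \<in> commutant S"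
  by (rule commutantI) (auto simp: bclin_scale_op commutantD1 commutantD2 fun_eq_iff bclinD_scaleC)

lemma commutant_diff: "(\<forall>X\<in>S. bounded_clinear X) \<Longrightarrow> T \<in> commutant S \<Longrightarrow> V \<in> commutant S \<Longrightarrow> (\<lambda>x. T x - V x) \<in> commutant S"
  by (rule commutantI) (auto simp: bclin_diff_op commutantD1 commutantD2 fun_eq_iff bclin_diff)

lemma commutant_bclin: "\<forall>X\<in>commutant S. bounded_clinear X"
  by (simp add: commutant_def)

lemma star_rep_bclin: "star_rep \<pi> \<Longrightarrow> bounded_clinear (\<pi> a)"
  by (simp add: star_rep_def)

lemma star_rep_mult: "star_rep \<pi> \<Longrightarrow> \<pi> (a * b) = \<pi> a \<circ> \<pi> b"
  by (simp add: star_rep_def)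

lemma star_rep_adj: "star_rep \<pi> \<Longrightarrow> cinner (\<pi> a x) y = cinner x (\<pi> (cstar a) y)"
  by (simp add: star_rep_def)

lemma star_rep_adj': "star_rep \<pi> \<Longrightarrow> cinner x (\<pi> a y) = cinner (\<pi> (cstar a) x) y"
  using star_rep_adj[of \<pi> "cstar a" x y] by (simp add: cstar_cstar)

lemma adj_commutant:
  fixes \<pi> :: "'a::cstar_algebra \<Rightarrow> 'h::chilbert_space \<Rightarrow> 'h"
  assumes sr: "star_rep \<pi>" and T: "T \<in> commutant (range \<pi>)"
  shows "adj T \<in> commutant (range \<pi>)"
proof (rule commutantI)
  have Tb: "bounded_clinear T" using T by (rule commutantD1)
  show "bounded_clinear (adj T)" by (rule adj_bclin[OF Tb])
  fix X assume "X \<in> range \<pi>"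
  then obtain a where a: "X = \<pi> a" by blast
  show "adj T \<circ> X = X \<circ> adj T"
  proof
    fix v
    show "(adj T \<circ> X) v = (X \<circ> adj T) v"
    proof (simp add: a, rule vector_eqI_cinner_right)
      fix u
      have "cinner u (adj T (\<pi> a v)) = cinner (T u) (\<pi> a v)" by (simp add: adj_prop[OF Tb])
      also have "\<dots> = cinner (\<pi> (cstar a) (T u)) v" by (rule star_rep_adj'[OF sr])
      also have "\<pi> (cstar a) (T u) = T (\<pi> (cstar a) u)" using commutantD2[OF T, of "\<pi> (cstar a)" u] by simp
      also have "cinner (T (\<pi> (cstar a) u)) v = cinner (\<pi> (cstar a) u) (adj T v)" by (rule adj_prop[OF Tb])
      also have "\<dots> = cinner u (\<pi> a (adj T v))" using star_rep_adj[OF sr, of "cstar a" u "adj T v"] by (simp add: cstar_cstar)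
      finally show "cinner u (adj T (\<pi> a v)) = cinner u (\<pi> a (adj T v))" .
    qed
  qed
qed

lemma cyclic_M':
  fixes \<pi> :: "'a::cstar_algebra \<Rightarrow> 'h::chilbert_space \<Rightarrow> 'h" and \<Omega> :: 'h
  assumes sr: "star_rep \<pi>" and sep: "separating_vector \<Omega> (commutant (commutant (range \<pi>)))"
  shows "closure ((\<lambda>W. W \<Omega>) ` commutant (range \<pi>)) = UNIV"
proof -
  define M' where "M' = commutant (range \<pi>)"
  define S0 where "S0 = (\<lambda>W. W \<Omega>) ` M'"
  define K where "K = closure S0"
  have rb: "\<forall>X\<in>range \<pi>. bounded_clinear X" using sr by (auto simp: star_rep_bclin)
  have sub0: "csubspace S0" unfolding csubspace_def S0_def
  proof (intro conjI ballI allI)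
    show "0 \<in> (\<lambda>W. W \<Omega>) ` M'" using commutant_zero[OF rb] by (force simp: M'_def)
    fix a b assume "a \<in> (\<lambda>W. W \<Omega>) ` M'" "b \<in> (\<lambda>W. W \<Omega>) ` M'"
    then obtain W V where "W \<in> M'" "V \<in> M'" "a = W \<Omega>" "b = V \<Omega>" by blast
    then show "a + b \<in> (\<lambda>W. W \<Omega>) ` M'"
      using commutant_add[OF rb, of W V] by (force simp: M'_def)
  next
    fix c a assume "a \<in> (\<lambda>W. W \<Omega>) ` M'"
    then obtain W where "W \<in> M'" "a = W \<Omega>" by blast
    then show "c *\<^sub>C a \<in> (\<lambda>W. W \<Omega>) ` M'"
      using commutant_scale[OF rb, of W c] by (force simp: M'_def)
  qed
  have subK: "csubspace K" unfolding K_def by (rule closure_csubspace[OF sub0])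
  have clK: "closed K" by (simp add: K_def)
  define P where "P = proj K"
  have Pb: "bounded_clinear P" unfolding P_def by (rule proj_bclin[OF clK subK])
  have PK: "P x \<in> K" and Po: "\<forall>k\<in>K. cinner (x - P x) k = 0" for x
    using proj_prop[OF clK subK, of x] by (simp_all add: P_def)
  have Tinv: "T k \<in> K" if T: "T \<in> M'" and k: "k \<in> K" for T k
  proof -
    have "T ` S0 \<subseteq> S0"
    proof
      fix z assume "z \<in> T ` S0"
      then obtain W where W: "W \<in> M'" and z: "z = T (W \<Omega>)" by (auto simp: S0_def)
      have TW: "T \<circ> W \<in> M'" using commutant_comp[of T "range \<pi>" W] T W by (simp add: M'_def)
      show "z \<in> S0" unfolding S0_def z by (rule image_eqI[where x="T \<circ> W", OF _ TW]) simp
    qed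
    then have "T ` S0 \<subseteq> K" using closure_subset by (auto simp: K_def)
    then have "T ` closure S0 \<subseteq> K"
      by (intro image_closure_subset bclin_continuous_on commutantD1) (use T in \<open>simp_all add: M'_def clK\<close>)
    then show ?thesis using k by (auto simp: K_def)
  qed
  have PM: "P \<in> commutant M'"
  proof (rule commutantI[OF Pb])
    fix T assume T: "T \<in> M'"
    have Tb: "bounded_clinear T" using T by (simp add: M'_def commutantD1)
    have adjT: "adj T \<in> M'" using adj_commutant[OF sr] T by (simp add: M'_def)
    show "P \<circ> T = T \<circ> P"
    proof
      fix x
      have "proj K (T x) = T (P x)"
      proof (rule proj_eqI[OF clK subK])
        show "T (P x) \<in> K" using Tinv[OF T PK] .
        show "\<forall>k\<in>K. cinner (T x - T (P x)) k = 0"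
        proof
          fix k assume k: "k \<in> K"
          have "cinner (T x - T (P x)) k = cinner (T (x - P x)) k" by (simp add: bclin_diff[OF Tb])
          also have "\<dots> = cinner (x - P x) (adj T k)" by (rule adj_prop[OF Tb])
          also have "\<dots> = 0" using Po Tinv[OF adjT k] by blast
          finally show "cinner (T x - T (P x)) k = 0" .
        qed
      qed
      then show "(P \<circ> T) x = (T \<circ> P) x" by (simp add: P_def)
    qed
  qed
  have M'b: "\<forall>X\<in>M'. bounded_clinear X" by (simp add: M'_def commutant_bclin)
  have QM: "(\<lambda>x. x - P x) \<in> commutant M'"
    by (rule commutant_diff[OF M'b commutant_id PM])
  have OK: "\<Omega> \<in> K"
  proof -
    have "\<Omega> \<in> S0" using commutant_id[of "range \<pi>"] by (force simp: S0_def M'_def)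
    then show ?thesis using closure_subset by (auto simp: K_def)
  qed
  have "P \<Omega> = \<Omega>" unfolding P_def by (rule proj_eqI[OF clK subK OK]) simp
  then have "(\<lambda>x. x - P x) \<Omega> = 0" by simp
  then have Q0: "(\<lambda>x. x - P x) = (\<lambda>_. 0)"
    using sep[unfolded separating_vector_def, rule_format, OF QM[unfolded M'_def]] by simp
  have "x = P x" for x using fun_cong[OF Q0, of x] by simp
  then have "x \<in> K" for x using PK[of x] by simp
  then show ?thesis by (auto simp: K_def S0_def M'_def)
qed



section \<open>From the GNS data to the abstract setting\<close>

lemma unitary_from:
  fixes U :: "'h::complex_inner \<Rightarrow> 'h"
  assumes U: "bounded_clinear U" and s: "surj U" and iso: "\<forall>x y. cinner (U x) (U y) = cinner x y"
  shows "unitary_pair U (inv U)"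
proof -
  have nU: "norm (U x) = norm x" for x by (rule norm_eq_from_cinner) (simp add: iso)
  have i: "inj U"
  proof (rule injI)
    fix x y assume "U x = U y"
    then have "U (x - y) = 0" by (simp add: bclin_diff[OF U])
    then have "norm (x - y) = 0" using nU[of "x - y"] by simp
    then show "x = y" by simp
  qed
  have UUi: "U (inv U x) = x" for x using s by (simp add: surj_f_inv_f)
  have UiU: "inv U (U x) = x" for x using i by (simp add: inv_f_f)
  have Ui: "bounded_clinear (inv U)"
  proof (rule bclin_intro[where K=1])
    fix x y :: 'h and c :: complex
    show "inv U (x + y) = inv U x + inv U y"
      by (metis UUi UiU bclinD_add[OF U])
    show "inv U (c *\<^sub>C x) = c *\<^sub>C inv U x"
      by (metis UUi UiU bclinD_scaleC[OF U])
    show "norm (inv U x) \<le> norm x * 1" using nU[of "inv U x"] by (simp add: UUi)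
  qed
  show ?thesis unfolding unitary_pair_def using U Ui UUi UiU iso by blast
qed

lemma intertwine_pow:
  fixes V :: "'h \<Rightarrow> 'h" and \<beta> :: "'a \<Rightarrow> 'a" and \<pi> :: "'a \<Rightarrow> 'h \<Rightarrow> 'h"
  assumes "\<And>a. V \<circ> \<pi> a = \<pi> (\<beta> a) \<circ> V"
  shows "(V ^^ j) \<circ> \<pi> a = \<pi> ((\<beta> ^^ j) a) \<circ> (V ^^ j)"
proof (induction j arbitrary: a)
  case 0 then show ?case by simp
next
  case (Suc j)
  have "(V ^^ Suc j) \<circ> \<pi> a = V \<circ> ((V ^^ j) \<circ> \<pi> a)" by (simp add: comp_assoc)
  also have "\<dots> = (V \<circ> \<pi> ((\<beta> ^^ j) a)) \<circ> (V ^^ j)" by (simp only: Suc comp_assoc)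
  also have "\<dots> = \<pi> ((\<beta> ^^ Suc j) a) \<circ> (V ^^ Suc j)" by (simp add: assms comp_assoc)
  finally show ?case .
qed

lemma funpow_cancel:
  fixes f g :: "'a \<Rightarrow> 'a"
  assumes "\<And>a. f (g a) = a"
  shows "(f ^^ j) ((g ^^ j) a) = a"
proof (induction j arbitrary: a)
  case 0 then show ?case by simp
next
  case (Suc j)
  have "(f ^^ Suc j) ((g ^^ Suc j) a) = (f ^^ j) (f (g ((g ^^ j) a)))"
    by (metis funpow_Suc_right funpow.simps(2) o_apply)
  then show ?case using Suc assms by simp
qed

lemma gns_facts:
  fixes \<alpha> :: "'a::cstar_algebra \<Rightarrow> 'a" and \<omega> :: "'a \<Rightarrow> complex"
    and \<pi> :: "'a \<Rightarrow> 'h::chilbert_space \<Rightarrow> 'h" and U :: "'h \<Rightarrow> 'h" and \<Omega> :: 'h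
  assumes ds: "cstar_dynamical_system \<alpha> \<omega>" and gc: "gns_covariant \<alpha> \<omega> \<pi> U \<Omega>"
  shows "star_rep \<pi>" "closure (range (\<lambda>A. \<pi> A \<Omega>)) = UNIV" "\<And>A. \<omega> A = cinner (\<pi> A \<Omega>) \<Omega>"
    "bounded_clinear U" "surj U" "\<forall>x y. cinner (U x) (U y) = cinner x y" "\<And>A. U (\<pi> A \<Omega>) = \<pi> (\<alpha> A) \<Omega>"
    "bij \<alpha>" "\<And>x y. \<alpha> (x * y) = \<alpha> x * \<alpha> y" "\<And>x. \<omega> (\<alpha> x) = \<omega> x" "is_state \<omega>"
  using ds gc unfolding gns_covariant_def gns_triple_def cstar_dynamical_system_def star_automorphism_def
  by auto

lemma intertwine:
  fixes \<pi> :: "'a::cstar_algebra \<Rightarrow> 'h::chilbert_space \<Rightarrow> 'h"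
  assumes sr: "star_rep \<pi>" and dense: "closure (range (\<lambda>A. \<pi> A \<Omega>)) = UNIV"
    and U: "bounded_clinear U" and cov: "\<And>A. U (\<pi> A \<Omega>) = \<pi> (\<alpha> A) \<Omega>"
    and hom: "\<And>x y. \<alpha> (x * y) = \<alpha> x * \<alpha> y"
  shows "U \<circ> \<pi> a = \<pi> (\<alpha> a) \<circ> U"
proof (rule bclin_eq_on_dense[OF _ _ dense])
  show "bounded_clinear (U \<circ> \<pi> a)" by (intro bclin_comp U star_rep_bclin[OF sr])
  show "bounded_clinear (\<pi> (\<alpha> a) \<circ> U)" by (intro bclin_comp U star_rep_bclin[OF sr])
  fix x assume "x \<in> range (\<lambda>A. \<pi> A \<Omega>)"
  then obtain b where x: "x = \<pi> b \<Omega>" by blast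
  have "(U \<circ> \<pi> a) x = U (\<pi> (a * b) \<Omega>)" by (simp add: x star_rep_mult[OF sr])
  also have "\<dots> = \<pi> (\<alpha> a * \<alpha> b) \<Omega>" by (simp add: cov hom)
  also have "\<dots> = (\<pi> (\<alpha> a) \<circ> U) x" by (simp add: x star_rep_mult[OF sr] cov)
  finally show "(U \<circ> \<pi> a) x = (\<pi> (\<alpha> a) \<circ> U) x" .
qed

lemma wm_dense:
  fixes U :: "'h::complex_inner \<Rightarrow> 'h" and \<Omega> :: 'h
  assumes up: "unitary_pair U Ui" and dense: "closure S = UNIV"
    and base: "\<And>u v. u \<in> S \<Longrightarrow> v \<in> S \<Longrightarrow>
       (\<lambda>N. (\<Sum>n<N. cmod (cinner ((U ^^ n) u) v - cinner u \<Omega> * cinner \<Omega> v)) / real N) \<longlonglongrightarrow> 0"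
  shows "(\<lambda>N. (\<Sum>n<N. cmod (cinner ((U ^^ n) u) v - cinner u \<Omega> * cinner \<Omega> v)) / real N) \<longlonglongrightarrow> 0"
proof -
  define F where "F u v n = cinner ((U ^^ n) u) v - cinner u \<Omega> * cinner \<Omega> v" for u v n
  define B0 where "B0 = 1 + (norm \<Omega>)\<^sup>2"
  have B0: "B0 > 0" by (simp add: B0_def add_pos_nonneg)
  have Uj: "bounded_clinear (U ^^ j)" for j using bclin_funpow[OF up_U[OF up]] .
  have Fb: "cmod (F a b n) \<le> B0 * (norm a * norm b)" for a b n
  proof -
    have "cmod (F a b n) \<le> cmod (cinner ((U ^^ n) a) b) + cmod (cinner a \<Omega> * cinner \<Omega> b)"
      unfolding F_def by (rule norm_triangle_ineq4)
    also have "cmod (cinner ((U ^^ n) a) b) \<le> norm a * norm b"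
      using cauchy_schwarz[of "(U ^^ n) a" b] by (simp add: up_pow_norm[OF up])
    also have "cmod (cinner a \<Omega> * cinner \<Omega> b) \<le> (norm a * norm \<Omega>) * (norm \<Omega> * norm b)"
      unfolding norm_mult by (intro mult_mono cauchy_schwarz) auto
    finally show ?thesis by (simp add: B0_def algebra_simps power2_eq_square)
  qed
  have Fd: "F u v n = F u' v' n + F (u - u') v n + F u' (v - v') n" for u v u' v' n
    by (simp add: F_def bclin_diff[OF Uj] cinner_diff_left cinner_diff_right algebra_simps)
  have "(\<lambda>N. (\<Sum>n<N. cmod (F u v n)) / real N) \<longlonglongrightarrow> 0"
  proof (rule approx_zero)
    show "0 \<le> (\<Sum>n<N. cmod (F u v n)) / real N" for N by (simp add: sum_nonneg)
    fix e :: real assume e: "e > 0"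
    define \<delta> where "\<delta> = min 1 (e / (B0 * (norm u + norm v + 1)))"
    have pos: "B0 * (norm u + norm v + 1) > 0" using B0 by (simp add: add_nonneg_pos)
    have \<delta>: "\<delta> > 0" using e pos by (simp add: \<delta>_def)
    have \<delta>1: "\<delta> \<le> 1" by (simp add: \<delta>_def)
    have \<delta>e: "B0 * (norm u + norm v + 1) * \<delta> \<le> e"
    proof -
      define P where "P = B0 * (norm u + norm v + 1)"
      have P: "P > 0" using pos by (simp add: P_def)
      have "\<delta> \<le> e / P" by (simp add: \<delta>_def P_def)
      then have "P * \<delta> \<le> P * (e / P)" using P by (intro mult_left_mono) auto
      also have "P * (e / P) = e" using P by simp
      finally show ?thesis by (simp add: P_def)
    qed
    have "u \<in> closure S" "v \<in> closure S" using dense by auto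
    then obtain u' v' where u': "u' \<in> S" "dist u' u < \<delta>" and v': "v' \<in> S" "dist v' v < \<delta>"
      using closure_approachable[THEN iffD1, rule_format, OF _ \<delta>] by meson
    have du: "norm (u - u') \<le> \<delta>" using u'(2) by (simp add: dist_norm norm_minus_commute)
    have dv: "norm (v - v') \<le> \<delta>" using v'(2) by (simp add: dist_norm norm_minus_commute)
    have nu': "norm u' \<le> norm u + 1"
      using norm_triangle_ineq2[of u' u] du \<delta>1 by (simp add: norm_minus_commute)
    define C where "C = B0 * (norm (u - u') * norm v + norm u' * norm (v - v'))"
    have C0: "C \<ge> 0" using B0 by (simp add: C_def)
    have Ce: "C \<le> e"
    proof -
      have "norm (u - u') * norm v + norm u' * norm (v - v') \<le> \<delta> * norm v + (norm u + 1) * \<delta>"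
        using \<delta> by (intro add_mono mult_mono du dv nu') auto
      also have "\<dots> = (norm u + norm v + 1) * \<delta>" by (simp add: algebra_simps)
      finally have "C \<le> B0 * ((norm u + norm v + 1) * \<delta>)" unfolding C_def using B0 by (simp add: mult_left_mono)
      then show ?thesis using \<delta>e by (simp add: mult.assoc)
    qed
    show "\<exists>b B. b \<longlonglongrightarrow> B \<and> B \<le> e \<and> (\<forall>N. (\<Sum>n<N. cmod (F u v n)) / real N \<le> b N)"
    proof (intro exI conjI allI)
      show "(\<lambda>N. (\<Sum>n<N. cmod (F u' v' n)) / real N + C) \<longlonglongrightarrow> 0 + C"
        by (intro tendsto_add tendsto_const) (use base[OF u'(1) v'(1)] in \<open>simp add: F_def\<close>)
      show "0 + C \<le> e" using Ce by simp
      fix N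
      have "cmod (F u v n) \<le> cmod (F u' v' n) + C" for n
      proof -
        have "cmod (F u v n) \<le> cmod (F u' v' n) + cmod (F (u - u') v n) + cmod (F u' (v - v') n)"
          unfolding Fd[of u v n u' v'] by (metis norm_triangle_ineq order_trans add_right_mono)
        also have "\<dots> \<le> cmod (F u' v' n) + B0 * (norm (u - u') * norm v) + B0 * (norm u' * norm (v - v'))"
          by (intro add_mono Fb order_refl)
        finally show ?thesis by (simp add: C_def algebra_simps)
      qed
      then have s: "(\<Sum>n<N. cmod (F u v n)) \<le> (\<Sum>n<N. cmod (F u' v' n)) + real N * C"
        using sum_mono[of "{..<N}" "\<lambda>n. cmod (F u v n)" "\<lambda>n. cmod (F u' v' n) + C"] by (simp add: sum.distrib)
      show "(\<Sum>n<N. cmod (F u v n)) / real N \<le> (\<Sum>n<N. cmod (F u' v' n)) / real N + C"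
      proof (cases "N = 0")
        case True then show ?thesis using C0 by simp
      next
        case False
        then have "(\<Sum>n<N. cmod (F u v n)) / real N \<le> ((\<Sum>n<N. cmod (F u' v' n)) + real N * C) / real N"
          using s by (simp add: divide_right_mono)
        also have "\<dots> = (\<Sum>n<N. cmod (F u' v' n)) / real N + C" using False by (simp add: field_simps)
        finally show ?thesis .
      qed
    qed
  qed
  then show ?thesis by (simp add: F_def)
qed



theorem proposition5p5:
  fixes \<alpha> :: "'a::cstar_algebra \<Rightarrow> 'a" and \<omega> :: "'a \<Rightarrow> complex"
    and \<pi> :: "'a \<Rightarrow> 'h::chilbert_space \<Rightarrow> 'h" and U :: "'h \<Rightarrow> 'h" and \<Omega> :: 'h
    and m1 m2 :: nat and A :: "'h \<Rightarrow> 'h"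
  assumes "cstar_dynamical_system \<alpha> \<omega>"
    and "weakly_mixing \<alpha> \<omega>"
    and "gns_covariant \<alpha> \<omega> \<pi> U \<Omega>"
    and "separating_vector \<Omega> (commutant (commutant (range \<pi>)))"
    and "0 < m1" and "m1 < m2"
    and "A \<in> commutant (commutant (range \<pi>)) \<union> commutant (commutant (commutant (range \<pi>)))"
  shows "\<forall>\<xi>. (\<lambda>N. complex_of_real (1 / real N) *\<^sub>C
                  (\<Sum>n<N. (U ^^ (n * m1)) (A ((U ^^ (n * m2)) \<xi>))))
             \<longlonglongrightarrow> (cinner (A \<Omega>) \<Omega> * cinner \<xi> \<Omega>) *\<^sub>C \<Omega>"
proof -
  note F = gns_facts[OF assms(1) assms(3)]
  have sr: "star_rep \<pi>" and dense: "closure (range (\<lambda>A. \<pi> A \<Omega>)) = UNIV"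
    and omg: "\<And>A. \<omega> A = cinner (\<pi> A \<Omega>) \<Omega>" and Ub: "bounded_clinear U" and sU: "surj U"
    and iso: "\<forall>x y. cinner (U x) (U y) = cinner x y" and cov: "\<And>A. U (\<pi> A \<Omega>) = \<pi> (\<alpha> A) \<Omega>"
    and bij: "bij \<alpha>" and hom: "\<And>x y. \<alpha> (x * y) = \<alpha> x * \<alpha> y" and inv\<omega>: "\<And>x. \<omega> (\<alpha> x) = \<omega> x"
    and st: "is_state \<omega>"
    using F by auto
  define Ui where "Ui = inv U"
  have up: "unitary_pair U Ui" unfolding Ui_def by (rule unitary_from[OF Ub sU iso])
  define \<alpha>i where "\<alpha>i = inv \<alpha>"
  have \<alpha>\<alpha>i: "\<alpha> (\<alpha>i a) = a" for a using bij by (simp add: \<alpha>i_def bij_is_surj surj_f_inv_f)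
  have \<alpha>i\<alpha>: "\<alpha>i (\<alpha> a) = a" for a using bij by (simp add: \<alpha>i_def bij_is_inj inv_f_f)
  have inter: "U \<circ> \<pi> a = \<pi> (\<alpha> a) \<circ> U" for a by (rule intertwine[OF sr dense Ub cov hom])
  have inter_i: "Ui \<circ> \<pi> a = \<pi> (\<alpha>i a) \<circ> Ui" for a
  proof
    fix x
    have "\<pi> a x = U (\<pi> (\<alpha>i a) (Ui x))"
      using fun_cong[OF inter[of "\<alpha>i a"], of "Ui x"] by (simp add: \<alpha>\<alpha>i up_UUi[OF up])
    then show "(Ui \<circ> \<pi> a) x = (\<pi> (\<alpha>i a) \<circ> Ui) x" by (simp add: up_UiU[OF up])
  qed
  have interj: "(U ^^ j) \<circ> \<pi> a = \<pi> ((\<alpha> ^^ j) a) \<circ> (U ^^ j)" for j a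
    by (rule intertwine_pow) (rule inter)
  have interij: "(Ui ^^ j) \<circ> \<pi> a = \<pi> ((\<alpha>i ^^ j) a) \<circ> (Ui ^^ j)" for j a
    by (rule intertwine_pow) (rule inter_i)
  have interj': "(U ^^ j) (\<pi> a x) = \<pi> ((\<alpha> ^^ j) a) ((U ^^ j) x)" for j a x
    using fun_cong[OF interj[of j a], of x] by simp
  have interij': "(Ui ^^ j) (\<pi> a x) = \<pi> ((\<alpha>i ^^ j) a) ((Ui ^^ j) x)" for j a x
    using fun_cong[OF interij[of j a], of x] by simp
  have canc1: "(\<alpha> ^^ j) ((\<alpha>i ^^ j) a) = a" for j a by (rule funpow_cancel) (rule \<alpha>\<alpha>i)
  have canc2: "(\<alpha>i ^^ j) ((\<alpha> ^^ j) a) = a" for j a by (rule funpow_cancel) (rule \<alpha>i\<alpha>)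
  have UO: "U \<Omega> = \<Omega>"
  proof -
    have "U \<Omega> - \<Omega> = 0"
    proof (rule orth_dense_zero[OF dense])
      fix x assume "x \<in> range (\<lambda>A. \<pi> A \<Omega>)"
      then obtain c where x: "x = \<pi> c \<Omega>" by blast
      define b where "b = \<alpha>i c"
      have c: "c = \<alpha> b" by (simp add: b_def \<alpha>\<alpha>i)
      have "cinner (U \<Omega>) (\<pi> c \<Omega>) = cinner (U \<Omega>) (U (\<pi> b \<Omega>))" by (simp add: c cov)
      also have "\<dots> = cinner \<Omega> (\<pi> b \<Omega>)" using iso by simp
      also have "\<dots> = cnj (\<omega> b)" by (simp add: omg cinner_commute[of \<Omega>])
      also have "\<dots> = cnj (\<omega> c)" by (simp add: c inv\<omega>)
      also have "\<dots> = cinner \<Omega> (\<pi> c \<Omega>)" by (simp add: omg cinner_commute[of \<Omega>])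
      finally show "cinner (U \<Omega> - \<Omega>) x = 0" by (simp add: x cinner_diff_left)
    qed
    then show ?thesis by simp
  qed
  have Upi: "(U ^^ n) (\<pi> b \<Omega>) = \<pi> ((\<alpha> ^^ n) b) \<Omega>" for n b
    by (induction n) (simp_all add: cov)
  have wmH: "(\<lambda>N. (\<Sum>n<N. cmod (cinner ((U ^^ n) u) v - cinner u \<Omega> * cinner \<Omega> v)) / real N) \<longlonglongrightarrow> 0" for u v
  proof (rule wm_dense[OF up dense])
    fix u v assume "u \<in> range (\<lambda>A. \<pi> A \<Omega>)" "v \<in> range (\<lambda>A. \<pi> A \<Omega>)"
    then obtain b c where u: "u = \<pi> b \<Omega>" and v: "v = \<pi> c \<Omega>" by blast
    have t1: "cinner ((U ^^ n) u) v = \<omega> (cstar c * (\<alpha> ^^ n) b)" for n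
    proof -
      have "cinner ((U ^^ n) u) v = cinner (\<pi> ((\<alpha> ^^ n) b) \<Omega>) (\<pi> c \<Omega>)" by (simp add: u v Upi)
      also have "\<dots> = cinner (\<pi> (cstar c) (\<pi> ((\<alpha> ^^ n) b) \<Omega>)) \<Omega>" by (rule star_rep_adj'[OF sr])
      also have "\<dots> = \<omega> (cstar c * (\<alpha> ^^ n) b)" by (simp add: omg star_rep_mult[OF sr])
      finally show ?thesis .
    qed
    have t2: "cinner u \<Omega> * cinner \<Omega> v = \<omega> (cstar c) * \<omega> b"
    proof -
      have "cinner \<Omega> v = cinner (\<pi> (cstar c) \<Omega>) \<Omega>" by (simp add: v star_rep_adj'[OF sr])
      then show ?thesis by (simp add: u omg)
    qed
    show "(\<lambda>N. (\<Sum>n<N. cmod (cinner ((U ^^ n) u) v - cinner u \<Omega> * cinner \<Omega> v)) / real N) \<longlonglongrightarrow> 0"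
      using assms(2) unfolding weakly_mixing_def t1 t2 by blast
  qed
  have nO: "norm \<Omega> = 1"
  proof -
    define c0 where "c0 = cinner \<Omega> \<Omega> - cinner \<Omega> \<Omega> * cinner \<Omega> \<Omega>"
    have fixU: "(U ^^ n) \<Omega> = \<Omega>" for n using up_pow_fix[of U \<Omega>, OF UO] .
    have "(\<lambda>N. (\<Sum>n<N. cmod c0) / real N) \<longlonglongrightarrow> 0" using wmH[of \<Omega> \<Omega>] by (simp add: fixU c0_def)
    moreover have "(\<lambda>N. (\<Sum>n<N. cmod c0) / real N) \<longlonglongrightarrow> cmod c0"
    proof (rule tendsto_eventually)
      show "\<forall>\<^sub>F N in sequentially. (\<Sum>n<N. cmod c0) / real N = cmod c0"
        using eventually_ge_at_top[of "1::nat"] by eventually_elim simp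
    qed
    ultimately have "cmod c0 = 0" using LIMSEQ_unique by blast
    then have "c0 = 0" by simp
    then have e: "(norm \<Omega>)\<^sup>2 = (norm \<Omega>)\<^sup>2 * (norm \<Omega>)\<^sup>2"
      unfolding c0_def cinner_self_norm by (metis eq_iff_diff_eq_0 of_real_eq_iff of_real_mult)
    have "\<Omega> \<noteq> 0"
    proof
      assume O: "\<Omega> = 0"
      then have "\<omega> x = 0" for x by (simp add: omg)
      then have "(SUP x\<in>{x. norm x \<le> 1}. cmod (\<omega> x)) = (SUP x\<in>{x::'a. norm x \<le> 1}. (0::real))" by simp
      also have "\<dots> = 0" by (rule cSUP_const) (auto intro: exI[of _ 0])
      finally show False using st by (simp add: is_state_def)
    qed
    then have "(norm \<Omega>)\<^sup>2 \<noteq> 0" by simp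
    then have "(norm \<Omega>)\<^sup>2 = 1" using e by (metis mult_cancel_left1)
    then show ?thesis using norm_ge_zero[of \<Omega>] by (simp add: power2_eq_1_iff)
  qed
  have es: "erg_setup U Ui \<Omega>" unfolding erg_setup_def using up UO nO wmH by blast
  have Uj: "bounded_clinear (U ^^ j)" for j using bclin_funpow[OF Ub] .
  have Uij: "bounded_clinear (Ui ^^ j)" for j using bclin_funpow[OF up_Ui[OF up]] .
  have rb: "\<forall>X\<in>range \<pi>. bounded_clinear X" using sr by (auto simp: star_rep_bclin)
  show ?thesis
  proof (cases "A \<in> commutant (commutant (range \<pi>))")
    case True
    define D where "D = commutant (range \<pi>)"
    show ?thesis
    proof (rule core[OF es assms(5,6), where D=D])
      show "bounded_clinear A" using True by (rule commutantD1)
      show "\<forall>W\<in>D. bounded_clinear W" by (simp add: D_def commutant_bclin)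
      show "\<forall>W\<in>D. \<exists>W'\<in>D. \<forall>u v. cinner (W u) v = cinner u (W' v)"
      proof
        fix W assume W: "W \<in> D"
        have "adj W \<in> D" using adj_commutant[OF sr] W by (simp add: D_def)
        moreover have "\<forall>u v. cinner (W u) v = cinner u (adj W v)"
          using adj_prop[OF commutantD1[of W "range \<pi>"]] W by (simp add: D_def)
        ultimately show "\<exists>W'\<in>D. \<forall>u v. cinner (W u) v = cinner u (W' v)" by blast
      qed
      show "\<forall>W\<in>D. \<forall>V\<in>D. W \<circ> V \<in> D" by (simp add: D_def commutant_comp)
      show "\<forall>W\<in>D. \<forall>j. (U ^^ j) \<circ> W \<circ> (Ui ^^ j) \<in> D"
      proof (intro ballI allI)
        fix W j assume W: "W \<in> D"
        show "(U ^^ j) \<circ> W \<circ> (Ui ^^ j) \<in> D" unfolding D_def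
        proof (rule commutantI)
          show "bounded_clinear ((U ^^ j) \<circ> W \<circ> (Ui ^^ j))"
            using W by (intro bclin_comp Uj Uij) (simp add: D_def commutantD1)
          fix X assume "X \<in> range \<pi>"
          then obtain a where X: "X = \<pi> a" by blast
          show "(U ^^ j) \<circ> W \<circ> (Ui ^^ j) \<circ> X = X \<circ> ((U ^^ j) \<circ> W \<circ> (Ui ^^ j))"
          proof
            fix x
            have "(U ^^ j) (W ((Ui ^^ j) (\<pi> a x))) = (U ^^ j) (W (\<pi> ((\<alpha>i ^^ j) a) ((Ui ^^ j) x)))"
              by (simp add: interij')
            also have "\<dots> = (U ^^ j) (\<pi> ((\<alpha>i ^^ j) a) (W ((Ui ^^ j) x)))"
              using commutantD2[of W "range \<pi>" "\<pi> ((\<alpha>i ^^ j) a)"] W by (simp add: D_def)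
            also have "\<dots> = \<pi> a ((U ^^ j) (W ((Ui ^^ j) x)))" by (simp add: interj' canc1)
            finally show "((U ^^ j) \<circ> W \<circ> (Ui ^^ j) \<circ> X) x = (X \<circ> ((U ^^ j) \<circ> W \<circ> (Ui ^^ j))) x"
              by (simp add: X)
          qed
        qed
      qed
      show "\<forall>W\<in>D. \<forall>j. (Ui ^^ j) \<circ> W \<circ> (U ^^ j) \<in> D"
      proof (intro ballI allI)
        fix W j assume W: "W \<in> D"
        show "(Ui ^^ j) \<circ> W \<circ> (U ^^ j) \<in> D" unfolding D_def
        proof (rule commutantI)
          show "bounded_clinear ((Ui ^^ j) \<circ> W \<circ> (U ^^ j))"
            using W by (intro bclin_comp Uj Uij) (simp add: D_def commutantD1)
          fix X assume "X \<in> range \<pi>"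
          then obtain a where X: "X = \<pi> a" by blast
          show "(Ui ^^ j) \<circ> W \<circ> (U ^^ j) \<circ> X = X \<circ> ((Ui ^^ j) \<circ> W \<circ> (U ^^ j))"
          proof
            fix x
            have "(Ui ^^ j) (W ((U ^^ j) (\<pi> a x))) = (Ui ^^ j) (W (\<pi> ((\<alpha> ^^ j) a) ((U ^^ j) x)))"
              by (simp add: interj')
            also have "\<dots> = (Ui ^^ j) (\<pi> ((\<alpha> ^^ j) a) (W ((U ^^ j) x)))"
              using commutantD2[of W "range \<pi>" "\<pi> ((\<alpha> ^^ j) a)"] W by (simp add: D_def)
            also have "\<dots> = \<pi> a ((Ui ^^ j) (W ((U ^^ j) x)))" by (simp add: interij' canc2)
            finally show "((Ui ^^ j) \<circ> W \<circ> (U ^^ j) \<circ> X) x = (X \<circ> ((Ui ^^ j) \<circ> W \<circ> (U ^^ j))) x"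
              by (simp add: X)
          qed
        qed
      qed
      show "\<forall>W\<in>D. A \<circ> W = W \<circ> A"
        using True unfolding D_def by (auto simp: fun_eq_iff commutantD2)
      show "closure ((\<lambda>W. W \<Omega>) ` D) = UNIV" unfolding D_def by (rule cyclic_M'[OF sr assms(4)])
    qed
  next
    case False
    then have AM': "A \<in> commutant (commutant (commutant (range \<pi>)))" using assms(7) by blast
    have "range \<pi> \<subseteq> commutant (commutant (range \<pi>))" by (rule subset_bicommutant[OF rb])
    then have AC: "A \<in> commutant (range \<pi>)" using AM' commutant_antimono by blast
    show ?thesis
    proof (rule core[OF es assms(5,6), where D="range \<pi>"])
      show "bounded_clinear A" using AC by (rule commutantD1)
      show "\<forall>W\<in>range \<pi>. bounded_clinear W" by (rule rb)
      show "\<forall>W\<in>range \<pi>. \<exists>W'\<in>range \<pi>. \<forall>u v. cinner (W u) v = cinner u (W' v)"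
        using star_rep_adj[OF sr] by blast
      show "\<forall>W\<in>range \<pi>. \<forall>V\<in>range \<pi>. W \<circ> V \<in> range \<pi>"
        using star_rep_mult[OF sr] by (metis (no_types, lifting) rangeE rangeI)
      show "\<forall>W\<in>range \<pi>. \<forall>j. (U ^^ j) \<circ> W \<circ> (Ui ^^ j) \<in> range \<pi>"
      proof (intro ballI allI)
        fix W j assume "W \<in> range \<pi>"
        then obtain a where W: "W = \<pi> a" by blast
        have "(U ^^ j) \<circ> W \<circ> (Ui ^^ j) = \<pi> ((\<alpha> ^^ j) a)"
          by (rule ext) (simp add: W interj' up_pow_inv1[OF up])
        then show "(U ^^ j) \<circ> W \<circ> (Ui ^^ j) \<in> range \<pi>" by simp
      qed
      show "\<forall>W\<in>range \<pi>. \<forall>j. (Ui ^^ j) \<circ> W \<circ> (U ^^ j) \<in> range \<pi>"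
      proof (intro ballI allI)
        fix W j assume "W \<in> range \<pi>"
        then obtain a where W: "W = \<pi> a" by blast
        have "(Ui ^^ j) \<circ> W \<circ> (U ^^ j) = \<pi> ((\<alpha>i ^^ j) a)"
          by (rule ext) (simp add: W interij' up_pow_inv2[OF up])
        then show "(Ui ^^ j) \<circ> W \<circ> (U ^^ j) \<in> range \<pi>" by simp
      qed
      show "\<forall>W\<in>range \<pi>. A \<circ> W = W \<circ> A"
        using AC by (auto simp: fun_eq_iff commutantD2)
      show "closure ((\<lambda>W. W \<Omega>) ` range \<pi>) = UNIV" using dense by (simp add: image_image)
    qed
  qed
qed


end
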